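(* Assume Conditions (A), (P) and (Ah) from the context, and assume additionally that $A_{h,1}$ and $A_{h,2}$ commute and are self-adjoint (with respect to $(\cdot,\cdot)_H$ on $V_h$). Let $t_f>0$, $N\in\mathbb N$, $\tau=t_f/N$, $t_n=n\tau$ and $S_{h,\tau}=(I+\tau A_{h,2})^{-1}(I+\tau A_{h,1})^{-1}(I+\tau^2A_{h,1}A_{h,2})$. Then for all $n\in\{1,\dots,N\}$, \[\big\|e^{-t_nA_h}P_h-S_{h,\tau}^{n-1}(I+\tau A_{h,2})^{-1}(I+\tau A_{h,1})^{-1}P_h\big\|_{\mathcal L(H)}\le C\frac{\tau}{t_n},\] with $C$ independent of $h$, $\tau$, $n$.
   Context: $(H,(\cdot,\cdot)_H,\|\cdot\|_H)$ is a real Hilbert space with complexification $H_{\mathbb C}$; $C$ denotes generic constants independent of $h$, $\tau$, $n$. Condition (A): $A:\mathrm{dom}(A)\subset H\to H$ and $A_\ell:\mathrm{dom}(A_\ell)\subset H\to H$ ($\ell=1,2$) are linear with $A=A_1+A_2$ on $\mathrm{dom}(A_1)\cap\mathrm{dom}(A_2)\subseteq\mathrm{dom}(A)$; $A$ is densely defined, positive and sectorial: there is $\varphi\in(0,\pi/2)$ such that $0$ and $S_\varphi=\{\lambda\in\mathbb C:\varphi<|\arg\lambda|\le\pi\}$ lie in the resolvent set and $\|(A-\lambda I)^{-1}\|_{\mathcal L(H_{\mathbb C})}\le C/|\lambda|$ on $S_\varphi$; $A_\ell A^{-1}$ is a well-defined bounded operator on $H$. Condition (P): $V_h\subset H$ ($h\in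 I\subset(0,\infty)$) are finite-dimensional subspaces and $P_h:H\to V_h$ bounded projections with $\|(I-P_h)v\|_H\le Ch^2\|Av\|_H$ for $v\in\mathrm{dom}(A)$. Condition (Ah): $V_h$ carries an inner product with norm $\|\cdot\|_{V_h}$, $\|v_h\|_H\le C\|v_h\|_{V_h}$, and $A_h,A_{h,1},A_{h,2}\in\mathcal L(V_h)$ satisfy for all $v_h,w_h\in V_h$, $\ell=1,2$: (a) $(A_hv_h,v_h)_H\ge C\|v_h\|^2_{V_h}$; (b) $|(A_hv_h,w_h)_H|\le C\|v_h\|_{V_h}\|w_h\|_{V_h}$; (c) $A_h=A_{h,1}+A_{h,2}$; (d) $(A_{h,\ell}v_h,v_h)_H\ge0$; (e) $\|A_{h,\ell}P_h\|_{\mathcal L(H)}\le Ch^{-2}$; (f) $\|(P_hA_\ell-A_{h,\ell}P_h)v\|_H\le C\|Av\|_H$ for $v\in\mathrm{dom}(A)$; (g) $\|A^{-1}-A_h^{-1}P_h\|_{\mathcal L(H)}\le Ch^2$. $e^{-tA_h}$ is the semigroup generated by $-A_h$ on $V_h$; operators on $V_h$ composed with $P_h$ are regarded as operators on $H$ and $\|\cdot\|_{\mathcal L(H)}$ is the operator norm w.r.t. $\|\cdot\|_H$. *)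

theory Defs
  imports "HOL-Analysis.Analysis"
begin

definition lin_on :: "'a::real_vector set \<Rightarrow> ('a \<Rightarrow> 'b::real_vector) \<Rightarrow> bool" where
  "lin_on V f \<longleftrightarrow> (\<forall>x\<in>V. \<forall>y\<in>V. f (x + y) = f x + f y) \<and> (\<forall>x\<in>V. \<forall>c. f (c *\<^sub>R x) = c *\<^sub>R f x)"

definition op_on :: "'a::real_vector set \<Rightarrow> ('a \<Rightarrow> 'a) \<Rightarrow> bool" where
  "op_on V f \<longleftrightarrow> lin_on V f \<and> f ` V \<subseteq> V"

definition fin_dim_subspace :: "'a::real_vector set \<Rightarrow> bool" where
  "fin_dim_subspace V \<longleftrightarrow> subspace V \<and> (\<exists>B. finite B \<and> V = span B)"

definition inner_product_on :: "'a::real_vector set \<Rightarrow> ('a \<Rightarrow> 'a \<Rightarrow> real) \<Rightarrow> bool" where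
  "inner_product_on V ip \<longleftrightarrow>
     (\<forall>x\<in>V. \<forall>y\<in>V. ip x y = ip y x) \<and>
     (\<forall>x\<in>V. \<forall>y\<in>V. \<forall>z\<in>V. ip (x + y) z = ip x z + ip y z) \<and>
     (\<forall>x\<in>V. \<forall>y\<in>V. \<forall>c. ip (c *\<^sub>R x) y = c * ip x y) \<and>
     (\<forall>x\<in>V. x \<noteq> 0 \<longrightarrow> ip x x > 0)"

text \<open>Complexification of an operator A on H: the complex space H_C is modelled as H \<times> H
  (u + i v \<leftrightarrow> (u,v)), with norm sqrt(|u|^2+|v|^2) (the product norm). This is (A - \<lambda> I)(u + i v).\<close>
definition cplx_shift :: "('a::real_vector \<Rightarrow> 'a) \<Rightarrow> complex \<Rightarrow> 'a \<times> 'a \<Rightarrow> 'a \<times> 'a" where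
  "cplx_shift A z p = (A (fst p) - Re z *\<^sub>R fst p + Im z *\<^sub>R snd p,
                        A (snd p) - Im z *\<^sub>R fst p - Re z *\<^sub>R snd p)"

text \<open>Sector S_phi = {lambda : phi < |arg lambda| <= pi}  (Arg takes values in (-pi, pi]).\<close>
definition sector :: "real \<Rightarrow> complex set" where
  "sector \<phi> = {z. z \<noteq> 0 \<and> \<phi> < \<bar>Arg z\<bar>}"

definition cond_A :: "'a::{real_inner,complete_space} set \<Rightarrow> ('a \<Rightarrow> 'a) \<Rightarrow> 'a set \<Rightarrow> ('a \<Rightarrow> 'a)
                     \<Rightarrow> 'a set \<Rightarrow> ('a \<Rightarrow> 'a) \<Rightarrow> bool" where
  "cond_A D A D1 A1 D2 A2 \<longleftrightarrow>
     subspace D \<and> subspace D1 \<and> subspace D2 \<and>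
     lin_on D A \<and> lin_on D1 A1 \<and> lin_on D2 A2 \<and>
     D1 \<inter> D2 \<subseteq> D \<and> (\<forall>v\<in>D1 \<inter> D2. A v = A1 v + A2 v) \<and>
     closure D = UNIV \<and>
     (\<forall>v\<in>D. inner (A v) v \<ge> 0) \<and>
     \<comment> \<open>0 lies in the resolvent set\<close>
     bij_betw A D UNIV \<and> (\<exists>C. \<forall>v\<in>D. norm v \<le> C * norm (A v)) \<and>
     \<comment> \<open>sectoriality\<close>
     (\<exists>\<phi> C. 0 < \<phi> \<and> \<phi> < pi / 2 \<and>
        (\<forall>z\<in>sector \<phi>. bij_betw (cplx_shift A z) (D \<times> D) UNIV \<and>
           (\<forall>p\<in>D \<times> D. norm p \<le> C / cmod z * norm (cplx_shift A z p)))) \<and>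
     \<comment> \<open>A_l A^{-1} well defined and bounded on H\<close>
     (\<exists>C. \<forall>f. the_inv_into D A f \<in> D1 \<and> norm (A1 (the_inv_into D A f)) \<le> C * norm f) \<and>
     (\<exists>C. \<forall>f. the_inv_into D A f \<in> D2 \<and> norm (A2 (the_inv_into D A f)) \<le> C * norm f)"

definition exp_op :: "real \<Rightarrow> ('a::real_normed_vector \<Rightarrow> 'a) \<Rightarrow> 'a \<Rightarrow> 'a" where
  "exp_op t B v = (\<Sum>k. ((- t) ^ k / fact k) *\<^sub>R (B ^^ k) v)"

end

theory Submission
  imports Defs
begin

definition vsum :: "'a::real_vector set \<Rightarrow> ('a \<Rightarrow> real) \<Rightarrow> 'a" where
  "vsum E c = (\<Sum>e\<in>E. c e *\<^sub>R e)"

definition onb :: "'a::real_inner set \<Rightarrow> bool" where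
  "onb E \<longleftrightarrow> finite E \<and> (\<forall>e\<in>E. norm e = 1) \<and> (\<forall>e\<in>E. \<forall>f\<in>E. e \<noteq> f \<longrightarrow> inner e f = 0)"

lemma onb_inner_vsum:
  assumes "onb E" "e0 \<in> E"
  shows "inner (vsum E c) e0 = c e0"
proof -
  have fin: "finite E" using assms by (simp add: onb_def)
  have "inner (vsum E c) e0 = (\<Sum>e\<in>E. c e * inner e e0)"
    by (simp add: vsum_def inner_sum_left)
  also have "\<dots> = c e0 * inner e0 e0 + (\<Sum>e\<in>E - {e0}. c e * inner e e0)"
    using fin assms(2) by (simp add: sum.remove)
  also have "(\<Sum>e\<in>E - {e0}. c e * inner e e0) = 0"
    using assms by (intro sum.neutral) (auto simp: onb_def)
  also have "inner e0 e0 = 1" using assms by (simp add: onb_def power2_norm_eq_inner[symmetric])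
  finally show ?thesis by simp
qed

lemma vsum_in_span: "vsum E c \<in> span E"
  unfolding vsum_def by (intro span_sum span_scale span_base)

lemma onb_span_vsum:
  assumes "onb E" "v \<in> span E"
  shows "v = vsum E (\<lambda>e. inner v e)"
proof -
  have fin: "finite E" using assms by (simp add: onb_def)
  obtain u where u: "v = (\<Sum>x\<in>E. u x *\<^sub>R x)"
    using assms(2) span_finite[OF fin] by auto
  have "v = vsum E u" using u by (simp add: vsum_def)
  moreover have "\<forall>e\<in>E. inner v e = u e"
    using \<open>v = vsum E u\<close> onb_inner_vsum[OF assms(1)] by simp
  ultimately show ?thesis unfolding vsum_def by (metis (no_types, lifting) sum.cong)
qed

lemma vsum_eq_iff:
  assumes "onb E"
  shows "vsum E c = vsum E d \<longleftrightarrow> (\<forall>e\<in>E. c e = d e)"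
proof
  assume "vsum E c = vsum E d"
  then show "\<forall>e\<in>E. c e = d e" using onb_inner_vsum[OF assms] by metis
next
  assume "\<forall>e\<in>E. c e = d e"
  then show "vsum E c = vsum E d" unfolding vsum_def by (intro sum.cong) auto
qed

lemma inner_vsum:
  assumes "onb E"
  shows "inner (vsum E c) (vsum E d) = (\<Sum>e\<in>E. c e * d e)"
proof -
  have "inner (vsum E c) (vsum E d) = (\<Sum>e\<in>E. d e * inner (vsum E c) e)"
    by (simp add: vsum_def[of E d] inner_sum_right)
  also have "\<dots> = (\<Sum>e\<in>E. c e * d e)"
    using onb_inner_vsum[OF assms] by (intro sum.cong) auto
  finally show ?thesis .
qed

lemma norm_vsum_sq:
  assumes "onb E"
  shows "(norm (vsum E c))\<^sup>2 = (\<Sum>e\<in>E. (c e)\<^sup>2)"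
proof -
  have "(norm (vsum E c))\<^sup>2 = inner (vsum E c) (vsum E c)" by (simp add: power2_norm_eq_inner)
  also have "\<dots> = (\<Sum>e\<in>E. c e * c e)" by (rule inner_vsum[OF assms])
  finally show ?thesis by (simp add: power2_eq_square)
qed

lemma norm_diag_le:
  assumes "onb E" "M \<ge> 0" "\<forall>e\<in>E. \<bar>m e\<bar> \<le> M"
  shows "norm (vsum E (\<lambda>e. m e * c e)) \<le> M * norm (vsum E c)"
proof -
  have "(norm (vsum E (\<lambda>e. m e * c e)))\<^sup>2 = (\<Sum>e\<in>E. (m e)\<^sup>2 * (c e)\<^sup>2)"
    using norm_vsum_sq[OF assms(1)] by (simp add: power_mult_distrib)
  also have "\<dots> \<le> (\<Sum>e\<in>E. M\<^sup>2 * (c e)\<^sup>2)"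
  proof (intro sum_mono mult_right_mono)
    fix e assume "e \<in> E"
    then have "\<bar>m e\<bar> \<le> M" using assms by auto
    then show "(m e)\<^sup>2 \<le> M\<^sup>2" by (metis abs_ge_zero power2_abs power_mono)
  qed simp
  also have "\<dots> = (M * norm (vsum E c))\<^sup>2"
    using norm_vsum_sq[OF assms(1)] by (simp add: power_mult_distrib sum_distrib_left)
  finally show ?thesis
    using assms(2) by (meson norm_ge_zero power2_le_imp_le mult_nonneg_nonneg)
qed

lemma lin_on_sum:
  assumes "lin_on W T" "subspace W" "finite F" "F \<subseteq> W"
  shows "T (\<Sum>e\<in>F. c e *\<^sub>R e) = (\<Sum>e\<in>F. c e *\<^sub>R T e)"
  using assms(3,4)
proof (induction F rule: finite_induct)
  case empty
  have "T (0 *\<^sub>R 0) = 0 *\<^sub>R T 0" using assms(1,2) subspace_0 unfolding lin_on_def by blast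
  then show ?case by simp
next
  case (insert x F)
  have s: "(\<Sum>e\<in>F. c e *\<^sub>R e) \<in> W"
    using insert assms(2) by (intro subspace_sum subspace_scale) auto
  have x: "x \<in> W" using insert by auto
  have "T (\<Sum>e\<in>insert x F. c e *\<^sub>R e) = T (c x *\<^sub>R x + (\<Sum>e\<in>F. c e *\<^sub>R e))"
    using insert by simp
  also have "\<dots> = T (c x *\<^sub>R x) + T (\<Sum>e\<in>F. c e *\<^sub>R e)"
    using assms(1,2) s x subspace_scale unfolding lin_on_def by blast
  also have "T (c x *\<^sub>R x) = c x *\<^sub>R T x" using assms(1) x unfolding lin_on_def by blast
  finally show ?case using insert by simp
qed

lemma diag_op:
  assumes "onb E" "lin_on W T" "subspace W" "E \<subseteq> W" "\<forall>e\<in>E. T e = m e *\<^sub>R e"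
  shows "T (vsum E c) = vsum E (\<lambda>e. m e * c e)"
proof -
  have "T (vsum E c) = (\<Sum>e\<in>E. c e *\<^sub>R T e)"
    unfolding vsum_def using assms lin_on_sum[OF assms(2,3)] by (auto simp: onb_def)
  also have "\<dots> = vsum E (\<lambda>e. m e * c e)"
    unfolding vsum_def using assms(5) by (intro sum.cong) auto
  finally show ?thesis .
qed

lemma onb_pairwise: "onb E \<Longrightarrow> pairwise orthogonal E"
  by (auto simp: onb_def pairwise_def orthogonal_def)

lemma onb_0: "onb E \<Longrightarrow> 0 \<notin> E"
  by (auto simp: onb_def)

lemma onb_indep: "onb E \<Longrightarrow> independent E"
  by (simp add: onb_pairwise onb_0 pairwise_orthogonal_independent)

lemma onb_subset: "onb E \<Longrightarrow> F \<subseteq> E \<Longrightarrow> onb F"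
  unfolding onb_def by (auto intro: finite_subset)

lemma onb_of_subspace:
  assumes "subspace U" "U \<subseteq> span F" "finite F"
  obtains G where "onb G" "span G = U"
proof -
  obtain B where B: "B \<subseteq> U" "independent B" "U \<subseteq> span B" "card B = dim U"
    by (rule basis_exists)
  have fB: "finite B"
    using independent_span_bound[OF assms(3) B(2)] B(1) assms(2) by auto
  obtain C where C: "finite C" "span C = span B" "pairwise orthogonal C"
    using basis_orthogonal[OF fB] by blast
  have sB: "span B = U"
    using B(1,3) span_minimal[OF B(1) assms(1)] by auto
  define G where "G = (\<lambda>x. inverse (norm x) *\<^sub>R x) ` (C - {0})"
  have "span G = span (C - {0})"
    unfolding G_def using C(1) by (intro span_image_scale) auto
  also have "\<dots> = span C" by simp
  finally have sG: "span G = U" using C(2) sB by simp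
  have "onb G"
    unfolding onb_def
  proof (intro conjI ballI impI)
    show "finite G" unfolding G_def using C(1) by simp
  next
    fix e assume "e \<in> G"
    then obtain x where "x \<in> C - {0}" "e = inverse (norm x) *\<^sub>R x" unfolding G_def by auto
    then show "norm e = 1" by simp
  next
    fix e f assume "e \<in> G" "f \<in> G" "e \<noteq> f"
    then obtain x y where "x \<in> C" "y \<in> C" "x \<noteq> y"
      "e = inverse (norm x) *\<^sub>R x" "f = inverse (norm y) *\<^sub>R y"
      unfolding G_def by auto
    moreover have "inner x y = 0"
      using C(3) \<open>x \<in> C\<close> \<open>y \<in> C\<close> \<open>x \<noteq> y\<close> by (auto simp: pairwise_def orthogonal_def)
    ultimately show "inner e f = 0" by simp
  qed
  then show ?thesis using that sG by blast
qed

lemma onb_compact: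
  assumes "onb G"
  shows "compact (span G \<inter> cball 0 r)"
proof -
  have "finite G" using assms by (simp add: onb_def)
  then show ?thesis using assms
  proof (induction G arbitrary: r rule: finite_induct)
    case empty
    have "span ({}::'a set) \<inter> cball 0 r = (if r \<ge> 0 then {0} else {})" by auto
    then show ?case by simp
  next
    case (insert f F)
    have onbF: "onb F" using insert.prems onb_subset by blast
    have nf: "norm f = 1" using insert.prems by (simp add: onb_def)
    have orthF: "\<And>y. y \<in> F \<Longrightarrow> orthogonal f y"
      using insert.prems insert.hyps by (auto simp: onb_def orthogonal_def)
    define K where "K = span F \<inter> cball 0 r"
    have cK: "compact K" unfolding K_def using insert.IH onbF by blast
    define g where "g = (\<lambda>p::'a \<times> real. fst p + snd p *\<^sub>R f)"
    have cg: "compact (g ` (K \<times> cball 0 r))"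
      unfolding g_def
      by (intro compact_continuous_image compact_Times cK compact_cball continuous_intros)
    have eq: "span (insert f F) \<inter> cball 0 r = g ` (K \<times> cball 0 r) \<inter> cball 0 r"
    proof (intro equalityI subsetI)
      fix v assume v: "v \<in> span (insert f F) \<inter> cball 0 r"
      then obtain k where k: "v - k *\<^sub>R f \<in> span F"
        using span_breakdown_eq by blast
      define w where "w = v - k *\<^sub>R f"
      have "orthogonal f w" using orthogonal_to_span[OF k orthF] w_def by simp
      then have "orthogonal w (k *\<^sub>R f)"
        by (simp add: orthogonal_def inner_commute)
      then have "(norm v)\<^sup>2 = (norm w)\<^sup>2 + (norm (k *\<^sub>R f))\<^sup>2"
        using norm_add_Pythagorean[of w "k *\<^sub>R f"] by (simp add: w_def)
      also have "(norm (k *\<^sub>R f))\<^sup>2 = k\<^sup>2" using nf by simp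
      finally have nv: "(norm v)\<^sup>2 = (norm w)\<^sup>2 + k\<^sup>2" .
      have vr: "norm v \<le> r" using v by simp
      then have "(norm v)\<^sup>2 \<le> r\<^sup>2" by (simp add: power_mono)
      then have "(norm w)\<^sup>2 \<le> r\<^sup>2" "k\<^sup>2 \<le> r\<^sup>2" using nv
        by (smt (verit) zero_le_power2)+
      have r0: "0 \<le> r" using vr norm_ge_zero[of v] by linarith
      have nw: "norm w \<le> r" using \<open>(norm w)\<^sup>2 \<le> r\<^sup>2\<close> r0 power2_le_imp_le by blast
      have "\<bar>k\<bar>\<^sup>2 \<le> r\<^sup>2" using \<open>k\<^sup>2 \<le> r\<^sup>2\<close> by simp
      then have nk: "\<bar>k\<bar> \<le> r" using r0 power2_le_imp_le by blast
      have "(w, k) \<in> K \<times> cball 0 r" using k nw nk unfolding K_def w_def by auto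
      moreover have "v = g (w, k)" unfolding g_def w_def by simp
      ultimately show "v \<in> g ` (K \<times> cball 0 r) \<inter> cball 0 r" using v by blast
    next
      fix v assume "v \<in> g ` (K \<times> cball 0 r) \<inter> cball 0 r"
      then obtain a b where ab: "a \<in> span F" "v = a + b *\<^sub>R f" "norm v \<le> r"
        unfolding g_def K_def by force
      have "a \<in> span (insert f F)" using ab(1) span_mono[of F "insert f F"] by auto
      moreover have "b *\<^sub>R f \<in> span (insert f F)" by (simp add: span_base span_scale)
      ultimately have "v \<in> span (insert f F)" using ab(2) by (simp add: span_add)
      then show "v \<in> span (insert f F) \<inter> cball 0 r" using ab by simp
    qed
    show ?case unfolding eq by (intro compact_Int_closed cg closed_cball)
  qed
qed

lemma onb_eigvec:
  assumes G: "onb G" "G \<noteq> {}" and lin: "lin_on (span G) T"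
    and inv: "\<forall>v\<in>span G. T v \<in> span G"
    and sa: "\<forall>v\<in>span G. \<forall>w\<in>span G. inner (T v) w = inner v (T w)"
  obtains e \<mu> where "e \<in> span G" "norm e = 1" "T e = \<mu> *\<^sub>R e"
proof -
  have fin: "finite G" using G by (simp add: onb_def)
  have Tadd: "\<And>x y. x \<in> span G \<Longrightarrow> y \<in> span G \<Longrightarrow> T (x + y) = T x + T y"
    using lin by (simp add: lin_on_def)
  have Tscale: "\<And>x c. x \<in> span G \<Longrightarrow> T (c *\<^sub>R x) = c *\<^sub>R T x"
    using lin by (simp add: lin_on_def)
  have Trep: "T v = (\<Sum>e\<in>G. inner v e *\<^sub>R T e)" if "v \<in> span G" for v
  proof -
    have "T v = T (vsum G (\<lambda>e. inner v e))" using onb_span_vsum[OF G(1) that] by simp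
    also have "\<dots> = (\<Sum>e\<in>G. inner v e *\<^sub>R T e)"
      unfolding vsum_def by (rule lin_on_sum[OF lin subspace_span fin]) (auto intro: span_base)
    finally show ?thesis .
  qed
  define f where "f = (\<lambda>v. inner (\<Sum>e\<in>G. inner v e *\<^sub>R T e) v)"
  define S where "S = (span G \<inter> cball 0 1) \<inter> {v::'a. norm v = 1}"
  have cS: "compact S" unfolding S_def
    by (intro compact_Int_closed onb_compact[OF G(1)] closed_Collect_eq continuous_intros)
  obtain g where "g \<in> G" using G(2) by blast
  then have "g \<in> S" using G(1) unfolding S_def by (auto simp: onb_def intro: span_base)
  then have neS: "S \<noteq> {}" by blast
  have cf: "continuous_on S f" unfolding f_def by (intro continuous_intros)
  obtain v0 where v0: "v0 \<in> S" "\<forall>y\<in>S. f y \<le> f v0"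
    using continuous_attains_sup[OF cS neS cf] by blast
  define \<mu> where "\<mu> = f v0"
  have v0G: "v0 \<in> span G" and nv0: "norm v0 = 1" using v0(1) unfolding S_def by auto
  have fT: "f v = inner (T v) v" if "v \<in> span G" for v
    unfolding f_def using Trep[OF that] by simp
  have claimA: "inner (T v) v \<le> \<mu> * (norm v)\<^sup>2" if vG: "v \<in> span G" for v
  proof (cases "v = 0")
    case True
    have "T (0 *\<^sub>R 0) = 0 *\<^sub>R T 0" using Tscale[of 0] by (simp add: span_zero)
    then show ?thesis using True by simp
  next
    case False
    define u where "u = inverse (norm v) *\<^sub>R v"
    have uS: "u \<in> S" unfolding S_def u_def using False vG by (auto intro: span_scale)
    have "f u \<le> \<mu>" using v0(2) uS unfolding \<mu>_def by blast
    moreover have "f u = inverse (norm v) ^ 2 * inner (T v) v"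
      using fT[of u] uS Tscale[OF vG] unfolding u_def S_def by (simp add: power2_eq_square)
    ultimately have "inverse (norm v) ^ 2 * inner (T v) v \<le> \<mu>" by simp
    then have "(norm v)\<^sup>2 * (inverse (norm v) ^ 2 * inner (T v) v) \<le> (norm v)\<^sup>2 * \<mu>"
      by (simp add: mult_left_mono)
    then show ?thesis using False by (simp add: field_simps power2_eq_square)
  qed
  have Tv0G: "T v0 \<in> span G" using inv v0G by blast
  define w where "w = T v0 - \<mu> *\<^sub>R v0"
  have wG: "w \<in> span G" unfolding w_def using Tv0G v0G by (intro span_diff span_scale)
  have muv0: "\<mu> = inner (T v0) v0" unfolding \<mu>_def using fT[OF v0G] .
  have v0v0: "inner v0 v0 = 1" using nv0 by (simp add: power2_norm_eq_inner[symmetric])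
  have wv0: "inner w v0 = 0" unfolding w_def using muv0 v0v0 by (simp add: inner_diff_left)
  have Tv0w: "inner (T v0) w = inner w w"
  proof -
    have "T v0 = w + \<mu> *\<^sub>R v0" unfolding w_def by simp
    then have "inner (T v0) w = inner w w + \<mu> * inner v0 w" by (simp add: inner_add_left)
    then show ?thesis using wv0 by (simp add: inner_commute)
  qed
  have "w = 0"
  proof (rule ccontr)
    assume "w \<noteq> 0"
    then have ww: "inner w w > 0" by simp
    define q where "q = inner (T w) w"
    define K where "K = \<bar>\<mu> * inner w w - q\<bar> + 1"
    have K0: "K > 0" unfolding K_def by simp
    define \<epsilon> where "\<epsilon> = inner w w / K"
    have e0: "\<epsilon> > 0" unfolding \<epsilon>_def using ww K0 by simp
    define v where "v = v0 + \<epsilon> *\<^sub>R w"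
    have vG: "v \<in> span G" unfolding v_def using v0G wG by (intro span_add span_scale)
    have Tv: "T v = T v0 + \<epsilon> *\<^sub>R T w"
      unfolding v_def using Tadd[OF v0G span_scale[OF wG]] Tscale[OF wG] by simp
    have Twv0: "inner (T w) v0 = inner w w"
      using sa wG v0G Tv0w by (metis inner_commute)
    have "inner (T v) v = inner (T v0 + \<epsilon> *\<^sub>R T w) (v0 + \<epsilon> *\<^sub>R w)"
      using Tv v_def by simp
    also have "\<dots> = \<mu> + 2 * \<epsilon> * inner w w + \<epsilon>\<^sup>2 * q"
      unfolding q_def using muv0 Tv0w Twv0
      by (simp add: inner_add_left inner_add_right power2_eq_square algebra_simps)
    moreover have "(norm v)\<^sup>2 = 1 + \<epsilon>\<^sup>2 * inner w w"
      unfolding v_def power2_norm_eq_inner using v0v0 wv0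
      by (simp add: inner_add_left inner_add_right power2_eq_square algebra_simps inner_commute)
    ultimately have "\<mu> + 2 * \<epsilon> * inner w w + \<epsilon>\<^sup>2 * q \<le> \<mu> * (1 + \<epsilon>\<^sup>2 * inner w w)"
      using claimA[OF vG] by simp
    then have "\<epsilon> * (2 * inner w w) \<le> \<epsilon> * (\<epsilon> * (\<mu> * inner w w - q))"
      by (simp add: algebra_simps power2_eq_square)
    then have "2 * inner w w \<le> \<epsilon> * (\<mu> * inner w w - q)"
      using e0 by simp
    also have "\<dots> \<le> \<epsilon> * \<bar>\<mu> * inner w w - q\<bar>" using e0 by (simp add: mult_left_mono)
    also have "\<dots> < \<epsilon> * K" unfolding K_def using e0 by simp
    also have "\<epsilon> * K = inner w w" unfolding \<epsilon>_def using K0 by simp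
    finally show False using ww by simp
  qed
  then have "T v0 = \<mu> *\<^sub>R v0" unfolding w_def by simp
  then show ?thesis using that v0G nv0 by blast
qed

lemma lin_on_subset: "lin_on W T \<Longrightarrow> U \<subseteq> W \<Longrightarrow> lin_on U T"
  unfolding lin_on_def by blast

lemma simul_diag:
  assumes F0: "onb F0"
    and lin1: "lin_on (span F0) T1" and lin2: "lin_on (span F0) T2"
    and sa1: "\<forall>v\<in>span F0. \<forall>w\<in>span F0. inner (T1 v) w = inner v (T1 w)"
    and sa2: "\<forall>v\<in>span F0. \<forall>w\<in>span F0. inner (T2 v) w = inner v (T2 w)"
    and comm: "\<forall>v\<in>span F0. T1 (T2 v) = T2 (T1 v)"
  shows "\<forall>F. onb F \<and> card F \<le> m \<and> span F \<subseteq> span F0 \<and> (\<forall>v\<in>span F. T1 v \<in> span F)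
     \<and> (\<forall>v\<in>span F. T2 v \<in> span F) \<longrightarrow>
     (\<exists>E. onb E \<and> span E = span F \<and> (\<forall>e\<in>E. \<exists>a. T1 e = a *\<^sub>R e) \<and> (\<forall>e\<in>E. \<exists>b. T2 e = b *\<^sub>R e))"
proof (induction m)
  case 0
  show ?case
  proof (intro allI impI)
    fix F :: "'a set" assume H: "onb F \<and> card F \<le> 0 \<and> span F \<subseteq> span F0 \<and> (\<forall>v\<in>span F. T1 v \<in> span F)
     \<and> (\<forall>v\<in>span F. T2 v \<in> span F)"
    then have "F = {}" by (auto simp: onb_def)
    then show "\<exists>E. onb E \<and> span E = span F \<and> (\<forall>e\<in>E. \<exists>a. T1 e = a *\<^sub>R e) \<and> (\<forall>e\<in>E. \<exists>b. T2 e = b *\<^sub>R e)"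
      by (intro exI[of _ "{}"]) (auto simp: onb_def)
  qed
next
  case (Suc m)
  show ?case
  proof (intro allI impI)
    fix F :: "'a set" assume H: "onb F \<and> card F \<le> Suc m \<and> span F \<subseteq> span F0 \<and> (\<forall>v\<in>span F. T1 v \<in> span F)
     \<and> (\<forall>v\<in>span F. T2 v \<in> span F)"
    have oF: "onb F" and cF: "card F \<le> Suc m" and sF: "span F \<subseteq> span F0"
      and i1: "\<forall>v\<in>span F. T1 v \<in> span F" and i2: "\<forall>v\<in>span F. T2 v \<in> span F"
      using H by auto
    have finF: "finite F" using oF by (simp add: onb_def)
    show "\<exists>E. onb E \<and> span E = span F \<and> (\<forall>e\<in>E. \<exists>a. T1 e = a *\<^sub>R e) \<and> (\<forall>e\<in>E. \<exists>b. T2 e = b *\<^sub>R e)"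
    proof (cases "F = {}")
      case True
      then show ?thesis by (intro exI[of _ "{}"]) (auto simp: onb_def)
    next
      case False
      have l1: "lin_on (span F) T1" using lin_on_subset[OF lin1 sF] .
      have l2: "lin_on (span F) T2" using lin_on_subset[OF lin2 sF] .
      have s1: "\<forall>v\<in>span F. \<forall>w\<in>span F. inner (T1 v) w = inner v (T1 w)" using sa1 sF by blast
      have s2: "\<forall>v\<in>span F. \<forall>w\<in>span F. inner (T2 v) w = inner v (T2 w)" using sa2 sF by blast
      have "T1 (0 *\<^sub>R 0) = 0 *\<^sub>R T1 0" using l1 span_zero unfolding lin_on_def by blast
      then have T10: "T1 0 = 0" by simp
      obtain e1 \<mu> where e1: "e1 \<in> span F" "norm e1 = 1" "T1 e1 = \<mu> *\<^sub>R e1"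
        using onb_eigvec[OF oF False l1 i1 s1] by blast
      define U where "U = {w \<in> span F. T1 w = \<mu> *\<^sub>R w}"
      have subU: "subspace U"
        unfolding subspace_def
      proof (intro conjI ballI allI)
        show "0 \<in> U" unfolding U_def using T10 span_zero by simp
      next
        fix x y assume "x \<in> U" "y \<in> U"
        then have "x \<in> span F" "y \<in> span F" "T1 x = \<mu> *\<^sub>R x" "T1 y = \<mu> *\<^sub>R y" unfolding U_def by auto
        moreover have "T1 (x + y) = T1 x + T1 y" using l1 calculation(1,2) unfolding lin_on_def by blast
        ultimately show "x + y \<in> U" unfolding U_def by (simp add: span_add scaleR_add_right)
      next
        fix c x assume "x \<in> U"
        then have "x \<in> span F" "T1 x = \<mu> *\<^sub>R x" unfolding U_def by auto
        moreover have "T1 (c *\<^sub>R x) = c *\<^sub>R T1 x" using l1 calculation(1) unfolding lin_on_def by blast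
        ultimately show "c *\<^sub>R x \<in> U" unfolding U_def by (simp add: span_scale)
      qed
      have UF: "U \<subseteq> span F" unfolding U_def by auto
      obtain G where G: "onb G" "span G = U" using onb_of_subspace[OF subU UF finF] by blast
      have "G \<noteq> {}"
      proof
        assume "G = {}"
        then have "U = {0}" using G(2) by simp
        moreover have "e1 \<in> U" unfolding U_def using e1 by simp
        ultimately show False using e1(2) by simp
      qed
      have lG: "lin_on (span G) T2" using lin_on_subset[OF l2] G(2) UF by simp
      have iG: "\<forall>v\<in>span G. T2 v \<in> span G"
      proof
        fix v assume "v \<in> span G"
        then have v: "v \<in> span F" "T1 v = \<mu> *\<^sub>R v" using G(2) unfolding U_def by auto
        have "T1 (T2 v) = T2 (T1 v)" using comm v(1) sF by blast
        also have "\<dots> = \<mu> *\<^sub>R T2 v" using v l2 unfolding lin_on_def by simp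
        finally show "T2 v \<in> span G" using G(2) i2 v(1) unfolding U_def by simp
      qed
      have sG: "\<forall>v\<in>span G. \<forall>w\<in>span G. inner (T2 v) w = inner v (T2 w)"
        using s2 G(2) UF by blast
      obtain e b where e: "e \<in> span G" "norm e = 1" "T2 e = b *\<^sub>R e"
        using onb_eigvec[OF G(1) \<open>G \<noteq> {}\<close> lG iG sG] by blast
      have eF: "e \<in> span F" and Te1: "T1 e = \<mu> *\<^sub>R e" using e(1) G(2) unfolding U_def by auto
      have ee: "inner e e = 1" using e(2) by (simp add: power2_norm_eq_inner[symmetric])
      define U' where "U' = {w \<in> span F. inner w e = 0}"
      have subU': "subspace U'"
        unfolding subspace_def U'_def
        by (simp add: span_add span_scale span_zero inner_add_left)
      have U'F: "U' \<subseteq> span F" unfolding U'_def by auto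
      obtain G' where G': "onb G'" "span G' = U'" using onb_of_subspace[OF subU' U'F finF] by blast
      have G'U': "G' \<subseteq> U'" using G'(2) span_superset by blast
      have eG': "e \<notin> G'" using G'U' ee unfolding U'_def by auto
      have oeG': "onb (insert e G')"
        using G'(1) G'U' e(2) unfolding onb_def U'_def by (simp add: inner_commute subset_iff)
      have "finite (insert e G') \<and> card (insert e G') \<le> card F"
        using independent_span_bound[OF finF onb_indep[OF oeG']] eF G'U' U'F by auto
      then have cG': "card G' \<le> m" using cF eG' G'(1) by (auto simp: onb_def)
      have sG'0: "span G' \<subseteq> span F0" using G'(2) U'F sF by auto
      have iG'1: "\<forall>v\<in>span G'. T1 v \<in> span G'"
      proof
        fix v assume "v \<in> span G'"
        then have v: "v \<in> span F" "inner v e = 0" using G'(2) unfolding U'_def by auto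
        have "inner (T1 v) e = inner v (T1 e)" using s1 v(1) eF by blast
        also have "\<dots> = 0" using Te1 v(2) by simp
        finally show "T1 v \<in> span G'" using G'(2) i1 v(1) unfolding U'_def by simp
      qed
      have iG'2: "\<forall>v\<in>span G'. T2 v \<in> span G'"
      proof
        fix v assume "v \<in> span G'"
        then have v: "v \<in> span F" "inner v e = 0" using G'(2) unfolding U'_def by auto
        have "inner (T2 v) e = inner v (T2 e)" using s2 v(1) eF by blast
        also have "\<dots> = 0" using e(3) v(2) by simp
        finally show "T2 v \<in> span G'" using G'(2) i2 v(1) unfolding U'_def by simp
      qed
      have "\<exists>E. onb E \<and> span E = span G' \<and> (\<forall>e\<in>E. \<exists>a. T1 e = a *\<^sub>R e) \<and> (\<forall>e\<in>E. \<exists>b. T2 e = b *\<^sub>R e)"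
        by (rule Suc.IH[THEN spec, of G', THEN mp]) (simp add: G'(1) cG' sG'0 iG'1 iG'2)
      then obtain E' where E': "onb E'" "span E' = span G'" "\<forall>x\<in>E'. \<exists>a. T1 x = a *\<^sub>R x"
          "\<forall>x\<in>E'. \<exists>b. T2 x = b *\<^sub>R x"
        by blast
      have E'U': "E' \<subseteq> U'" using E'(2) G'(2) span_superset by blast
      have oE: "onb (insert e E')"
        using E'(1) E'U' e(2) unfolding onb_def U'_def by (simp add: inner_commute subset_iff)
      have "span (insert e E') = span F"
      proof
        have "insert e E' \<subseteq> span F" using eF E'U' U'F by auto
        then show "span (insert e E') \<subseteq> span F" using span_minimal subspace_span by blast
      next
        show "span F \<subseteq> span (insert e E')"
        proof
          fix v assume vF: "v \<in> span F"
          have "inner (v - inner v e *\<^sub>R e) e = 0" using ee by (simp add: inner_diff_left)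
          then have "v - inner v e *\<^sub>R e \<in> span E'"
            using vF eF E'(2) G'(2) unfolding U'_def by (simp add: span_diff span_scale)
          then show "v \<in> span (insert e E')" using span_breakdown_eq by blast
        qed
      qed
      moreover have "\<forall>x\<in>insert e E'. \<exists>a. T1 x = a *\<^sub>R x" using E'(3) Te1 by blast
      moreover have "\<forall>x\<in>insert e E'. \<exists>a. T2 x = a *\<^sub>R x" using E'(4) e(3) by blast
      ultimately show ?thesis using oE by blast
    qed
  qed
qed

lemma simul_diag':
  assumes F0: "onb F0"
    and lin1: "lin_on (span F0) T1" and lin2: "lin_on (span F0) T2"
    and i1: "\<forall>v\<in>span F0. T1 v \<in> span F0" and i2: "\<forall>v\<in>span F0. T2 v \<in> span F0"
    and sa1: "\<forall>v\<in>span F0. \<forall>w\<in>span F0. inner (T1 v) w = inner v (T1 w)"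
    and sa2: "\<forall>v\<in>span F0. \<forall>w\<in>span F0. inner (T2 v) w = inner v (T2 w)"
    and comm: "\<forall>v\<in>span F0. T1 (T2 v) = T2 (T1 v)"
  obtains E where "onb E" "span E = span F0" "\<forall>e\<in>E. T1 e = inner (T1 e) e *\<^sub>R e"
     "\<forall>e\<in>E. T2 e = inner (T2 e) e *\<^sub>R e"
proof -
  have "\<exists>E. onb E \<and> span E = span F0 \<and> (\<forall>e\<in>E. \<exists>a. T1 e = a *\<^sub>R e) \<and> (\<forall>e\<in>E. \<exists>b. T2 e = b *\<^sub>R e)"
    by (rule simul_diag[OF assms(1,2,3,6,7,8), of "card F0", THEN spec, of F0, THEN mp]) (simp add: F0 i1 i2)
  then obtain E where E: "onb E" "span E = span F0" "\<forall>e\<in>E. \<exists>a. T1 e = a *\<^sub>R e" "\<forall>e\<in>E. \<exists>b. T2 e = b *\<^sub>R e"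
    by blast
  have "\<forall>e\<in>E. inner e e = 1" using E(1) by (simp add: onb_def power2_norm_eq_inner[symmetric])
  have "\<forall>e\<in>E. T1 e = inner (T1 e) e *\<^sub>R e"
  proof
    fix e assume "e \<in> E"
    then obtain a where "T1 e = a *\<^sub>R e" "inner e e = 1" using E(3) \<open>\<forall>e\<in>E. inner e e = 1\<close> by blast
    then show "T1 e = inner (T1 e) e *\<^sub>R e" by simp
  qed
  moreover have "\<forall>e\<in>E. T2 e = inner (T2 e) e *\<^sub>R e"
  proof
    fix e assume "e \<in> E"
    then obtain a where "T2 e = a *\<^sub>R e" "inner e e = 1" using E(4) \<open>\<forall>e\<in>E. inner e e = 1\<close> by blast
    then show "T2 e = inner (T2 e) e *\<^sub>R e" by simp
  qed
  ultimately show ?thesis using that E(1,2) by blast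
qed

lemma z_exp_le: fixes z :: real assumes "z \<ge> 0" shows "z * exp (- z) \<le> 1"
proof -
  have "z \<le> exp z" using exp_ge_add_one_self[of z] by linarith
  then have "z * exp (-z) \<le> exp z * exp (-z)" by (simp add: mult_right_mono)
  then show ?thesis by (simp add: exp_minus field_simps)
qed

lemma z2_exp_le: fixes z :: real assumes "z \<ge> 0" shows "z\<^sup>2 * exp (- z) \<le> 4"
proof -
  have "(z/2) * exp (-(z/2)) \<le> 1" using z_exp_le[of "z/2"] assms by simp
  then have "((z/2) * exp (-(z/2)))\<^sup>2 \<le> 1"
    using assms by (simp add: power_le_one)
  moreover have "((z/2) * exp (-(z/2)))\<^sup>2 = z\<^sup>2 * exp (-z) / 4"
    by (simp add: power2_eq_square field_simps flip: exp_add)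
  ultimately show ?thesis by simp
qed

lemma z_exp_c_le: fixes z c :: real assumes "z \<ge> 0" "c > 0" shows "z * exp (- z / c) \<le> c"
proof -
  have "(z/c) * exp (-(z/c)) \<le> 1" using z_exp_le[of "z/c"] assms by simp
  then show ?thesis using assms by (simp add: field_simps)
qed

lemma z2_exp_c_le: fixes z c :: real assumes "z \<ge> 0" "c > 0" shows "z\<^sup>2 * exp (- z / c) \<le> 4 * c\<^sup>2"
proof -
  have "(z/c)\<^sup>2 * exp (-(z/c)) \<le> 4" using z2_exp_le[of "z/c"] assms by simp
  then show ?thesis using assms by (simp add: field_simps power2_eq_square)
qed

lemma pow_diff_le:
  fixes a b M :: real
  assumes "0 \<le> a" "a \<le> M" "0 \<le> b" "b \<le> M"
  shows "\<bar>a ^ Suc k - b ^ Suc k\<bar> \<le> real (Suc k) * \<bar>a - b\<bar> * M ^ k"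
proof (induction k)
  case 0 then show ?case by simp
next
  case (Suc k)
  have M0: "M \<ge> 0" using assms by linarith
  have "a ^ Suc (Suc k) - b ^ Suc (Suc k) = a * (a ^ Suc k - b ^ Suc k) + b ^ Suc k * (a - b)"
    by (simp add: algebra_simps)
  then have "\<bar>a ^ Suc (Suc k) - b ^ Suc (Suc k)\<bar> \<le> \<bar>a\<bar> * \<bar>a ^ Suc k - b ^ Suc k\<bar> + \<bar>b ^ Suc k\<bar> * \<bar>a - b\<bar>"
    by (metis abs_mult abs_triangle_ineq)
  also have "\<dots> \<le> M * (real (Suc k) * \<bar>a - b\<bar> * M ^ k) + M ^ Suc k * \<bar>a - b\<bar>"
  proof (intro add_mono mult_mono)
    have "b ^ Suc k \<le> M ^ Suc k" using assms by (intro power_mono) auto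
    then show "\<bar>b ^ Suc k\<bar> \<le> M ^ Suc k" using assms by simp
  qed (use assms Suc M0 in auto)
  also have "\<dots> = real (Suc (Suc k)) * \<bar>a - b\<bar> * M ^ Suc k" by (simp add: algebra_simps)
  finally show ?case .
qed

lemma le_of_mult_ge1:
  fixes z p c :: real
  assumes "p \<ge> 1" "z * p \<le> c" "c \<ge> 0"
  shows "z \<le> c"
proof (cases "z \<le> 0")
  case True then show ?thesis using assms by linarith
next
  case False
  then have "z * 1 \<le> z * p" using assms by (intro mult_left_mono) auto
  then show ?thesis using assms by linarith
qed

lemma sq_sum_le:
  fixes a b :: real
  shows "(a + b)\<^sup>2 \<le> 2 * a\<^sup>2 + 2 * b\<^sup>2"
proof -
  have "0 \<le> (a - b)\<^sup>2" by simp
  then show ?thesis by (simp add: power2_eq_square algebra_simps)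
qed

lemma scalar_bound:
  fixes x y :: real and m :: nat
  assumes x0: "x \<ge> 0" and y0: "y \<ge> 0"
  shows "\<bar>exp (- ((real m + 1) * (x + y))) - ((1 + x*y)/((1+x)*(1+y)))^m / ((1+x)*(1+y))\<bar>
          \<le> 400 / (real m + 1)"
proof -
  define s where "s = x + y"
  define p where "p = (1+x)*(1+y)"
  define q where "q = 1 / p"
  define r where "r = (1 + x*y) / p"
  define n where "n = real m + 1"
  have n1: "n \<ge> 1" unfolding n_def by simp
  have s0: "s \<ge> 0" unfolding s_def using x0 y0 by simp
  have xy0: "x * y \<ge> 0" using x0 y0 by simp
  have p_eq: "p = 1 + s + x * y" unfolding p_def s_def by (simp add: algebra_simps)
  have p1: "p \<ge> 1" using p_eq s0 xy0 by simp
  have q0: "q > 0" and q1: "q \<le> 1" unfolding q_def using p1 by auto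
  have qp: "q * p = 1" unfolding q_def using p1 by simp
  have r_eq: "r = 1 - s * q"
    unfolding r_def q_def using p1 p_eq by (simp add: field_simps)
  have "s * q \<le> 1"
  proof -
    have "s * q * p = s" using qp by (simp add: mult.assoc)
    moreover have "s \<le> p" using p_eq xy0 by simp
    ultimately have "s * q * p \<le> 1 * p" by linarith
    then show ?thesis using p1 by (simp add: mult_le_cancel_right)
  qed
  then have r0: "r \<ge> 0" using r_eq by simp
  have r_exp: "r \<le> exp (- (s * q))" using r_eq exp_ge_add_one_self[of "- (s * q)"] by simp
  have goal_eq: "((1 + x*y)/((1+x)*(1+y)))^m / ((1+x)*(1+y)) = r ^ m * q"
    unfolding r_def q_def p_def by simp
  have A0: "exp (- (n * s)) \<ge> 0" by simp
  have B0: "r ^ m * q \<ge> 0" using r0 q0 by simp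
  have main: "\<bar>exp (- (n * s)) - r ^ m * q\<bar> \<le> 400 / n"
  proof (cases "s \<ge> 1")
    case True
    have "exp (- (n * s)) \<le> exp (- n)" using True n1 by simp
    also have "n * exp (- n) \<le> 1" using z_exp_le[of n] n1 by simp
    then have "exp (- n) \<le> 1 / n" using n1 by (simp add: field_simps)
    finally have A: "exp (- (n * s)) \<le> 1 / n" .
    have "r ^ m \<le> exp (- (s * q)) ^ m" using r0 r_exp by (simp add: power_mono)
    also have "\<dots> = exp (- (real m * (s * q)))" by (simp flip: exp_of_nat_mult)
    also have "\<dots> \<le> exp (- (real m * q))" using True q0 by (simp add: mult_le_cancel_left)
    finally have rm: "r ^ m \<le> exp (- (real m * q))" .
    have "n * (r ^ m * q) \<le> n * (exp (- (real m * q)) * q)"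
      using rm q0 n1 by (simp add: mult_right_mono)
    also have "\<dots> = q * exp (- (real m * q)) + (real m * q) * exp (- (real m * q))"
      unfolding n_def by (simp add: algebra_simps)
    also have "\<dots> \<le> 1 + 1"
    proof (rule add_mono)
      have "exp (- (real m * q)) \<le> 1" using q0 by simp
      then show "q * exp (- (real m * q)) \<le> 1" using q0 q1 by (simp add: mult_le_one)
      show "(real m * q) * exp (- (real m * q)) \<le> 1" using q0 by (intro z_exp_le) simp
    qed
    finally have B: "r ^ m * q \<le> 2 / n" using n1 by (simp add: field_simps)
    have "\<bar>exp (- (n * s)) - r ^ m * q\<bar> \<le> exp (- (n * s)) + r ^ m * q" using A0 B0 by linarith
    also have "\<dots> \<le> 1 / n + 2 / n" using A B by linarith
    also have "\<dots> \<le> 400 / n" using n1 by (simp add: divide_right_mono)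
    finally show ?thesis .
  next
    case False
    then have s1: "s < 1" by simp
    have xs: "x \<le> s" "y \<le> s" unfolding s_def using x0 y0 by auto
    have xys: "x * y \<le> s\<^sup>2" using xs x0 y0 by (simp add: power2_eq_square mult_mono)
    have xy1: "x * y \<le> 1" using xs x0 y0 s1 by (simp add: mult_le_one)
    have p3: "p \<le> 3" using p_eq s1 xy1 by simp
    have q3: "q \<ge> 1/3" unfolding q_def using p3 p1 by (simp add: field_simps)
    define \<alpha> where "\<alpha> = exp (- s)"
    define M where "M = exp (- s / 3)"
    have \<alpha>0: "\<alpha> \<ge> 0" unfolding \<alpha>_def by simp
    have \<alpha>M: "\<alpha> \<le> M" unfolding \<alpha>_def M_def using s0 by simp
    have rM: "r \<le> M"
    proof -
      have "s * (1/3) \<le> s * q" using q3 s0 by (rule mult_left_mono)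
      then have "s / 3 \<le> s * q" by simp
      then have "exp (- (s * q)) \<le> M" unfolding M_def by simp
      then show ?thesis using r_exp by simp
    qed
    have \<alpha>low: "\<alpha> \<ge> 1 - s" unfolding \<alpha>_def using exp_ge_add_one_self[of "-s"] by simp
    have \<alpha>up: "\<alpha> * (1 + s) \<le> 1"
    proof -
      have "1 + s \<le> exp s" using exp_ge_add_one_self[of s] by simp
      then have "\<alpha> * (1 + s) \<le> \<alpha> * exp s" using \<alpha>0 by (simp add: mult_left_mono)
      then show ?thesis unfolding \<alpha>_def by (simp add: exp_minus)
    qed
    have \<alpha>1: "\<alpha> \<le> 1" unfolding \<alpha>_def using s0 by simp
    have d1: "\<bar>\<alpha> - q\<bar> \<le> 2 * s\<^sup>2"
    proof -
      have "(\<alpha> - q) * p \<le> s\<^sup>2"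
      proof -
        have "(\<alpha> - q) * p = \<alpha> * (1 + s) + \<alpha> * (x * y) - 1" using qp p_eq by (simp add: algebra_simps)
        also have "\<dots> \<le> \<alpha> * (x * y)" using \<alpha>up by simp
        also have "\<dots> \<le> x * y" using mult_right_mono[OF \<alpha>1 xy0] by simp
        finally show ?thesis using xys by simp
      qed
      then have u: "\<alpha> - q \<le> s\<^sup>2"
        using le_of_mult_ge1[OF p1] zero_le_power2 by blast
      have "(q - \<alpha>) * p \<le> 2 * s\<^sup>2"
      proof -
        have "(q - \<alpha>) * p = 1 - \<alpha> * p" using qp by (simp add: algebra_simps)
        also have "\<dots> \<le> 1 - (1 - s) * p" using \<alpha>low p1 by (simp add: mult_right_mono)
        also have "\<dots> = s * p - s - x * y" using p_eq by (simp add: algebra_simps)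
        also have "\<dots> = s * s + s * (x * y) - x * y" using p_eq by (simp add: algebra_simps)
        also have "\<dots> \<le> s * s" using mult_right_mono[of s 1 "x * y"] s1 xy0 by simp
        finally have "(q - \<alpha>) * p \<le> s * s" .
        moreover have "s * s \<ge> 0" by simp
        ultimately show ?thesis unfolding power2_eq_square by linarith
      qed
      moreover have "2 * s\<^sup>2 \<ge> 0" by simp
      ultimately have "q - \<alpha> \<le> 2 * s\<^sup>2"
        using le_of_mult_ge1[OF p1] by blast
      moreover have "s\<^sup>2 \<ge> 0" by simp
      ultimately show ?thesis using u by (simp add: abs_le_iff)
    qed
    have d2: "\<bar>\<alpha> - r\<bar> \<le> 2 * s\<^sup>2"
    proof -
      have "\<alpha> - r = \<alpha> - 1 + s * q" using r_eq by simp
      have u: "\<alpha> - r \<le> 0"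
      proof -
        have "(\<alpha> - r) * p = \<alpha> * (1 + s) + \<alpha> * (x * y) - 1 - x * y"
        proof -
          have "r * p = 1 + x * y" unfolding r_def using p1 by simp
          then show ?thesis using p_eq by (simp add: algebra_simps)
        qed
        also have "\<dots> \<le> 0" using \<alpha>up mult_right_mono[OF \<alpha>1 xy0] by simp
        finally have "(\<alpha> - r) * p \<le> 0" .
        then show ?thesis using le_of_mult_ge1[OF p1, of "\<alpha> - r" 0] by linarith
      qed
      have "1 - q = (s + x * y) * q" using qp p_eq by (simp add: algebra_simps)
      also have "\<dots> \<le> s + x * y" using q1 q0 s0 xy0 by (simp add: mult_left_le)
      finally have "1 - q \<le> s + s\<^sup>2" using xys by simp
      then have "s * (1 - q) \<le> s * (s + s\<^sup>2)" using s0 by (simp add: mult_left_mono)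
      also have "\<dots> \<le> 2 * s\<^sup>2" using s0 s1 by (simp add: power2_eq_square algebra_simps mult_left_le_one_le)
      finally have "s * (1 - q) \<le> 2 * s\<^sup>2" .
      then have "\<alpha> - r \<ge> - 2 * s\<^sup>2" using r_eq \<alpha>low by (simp add: algebra_simps)
      then show ?thesis using u by simp
    qed
    have Aeq: "exp (- (n * s)) = \<alpha> ^ m * \<alpha>"
    proof -
      have "- (n * s) = real (Suc m) * (- s)" unfolding n_def by simp
      then have "exp (- (n * s)) = exp (- s) ^ Suc m" by (simp only: exp_of_nat_mult)
      then show ?thesis unfolding \<alpha>_def by (simp add: mult.commute)
    qed
    have dec: "exp (- (n * s)) - r ^ m * q = \<alpha> ^ m * (\<alpha> - q) + (\<alpha> ^ m - r ^ m) * q"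
      using Aeq by (simp add: algebra_simps)
    have Mm: "M ^ k = exp (- (real k * s) / 3)" for k :: nat
    proof -
      have "M ^ k = exp (real k * (- s / 3))" unfolding M_def by (simp only: exp_of_nat_mult)
      then show ?thesis by simp
    qed
    have T1: "n * \<bar>\<alpha> ^ m * (\<alpha> - q)\<bar> \<le> 8"
    proof -
      have "\<bar>\<alpha> ^ m * (\<alpha> - q)\<bar> = \<alpha> ^ m * \<bar>\<alpha> - q\<bar>" using \<alpha>0 by (simp add: abs_mult)
      also have "\<dots> \<le> M ^ m * (2 * s\<^sup>2)" using \<alpha>0 \<alpha>M d1 by (intro mult_mono power_mono) auto
      finally have "n * \<bar>\<alpha> ^ m * (\<alpha> - q)\<bar> \<le> n * (M ^ m * (2 * s\<^sup>2))" using n1 by (simp add: mult_left_mono)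
      also have "\<dots> = 2 * ((real m * s) * s * exp (- (real m * s) / 3)) + 2 * (s\<^sup>2 * exp (- (real m * s) / 3))"
        unfolding n_def Mm by (simp add: algebra_simps power2_eq_square)
      also have "\<dots> \<le> 2 * 3 + 2 * 1"
      proof (intro add_mono mult_left_mono)
        have "(real m * s) * s * exp (- (real m * s) / 3) \<le> (real m * s) * exp (- (real m * s) / 3)"
        proof -
          have "(real m * s) * s * exp (- (real m * s) / 3) = s * ((real m * s) * exp (- (real m * s) / 3))"
            by (simp only: mult_ac)
          also have "\<dots> \<le> (real m * s) * exp (- (real m * s) / 3)"
            using s0 s1 by (intro mult_left_le_one_le) auto
          finally show ?thesis .
        qed
        also have "\<dots> \<le> 3" using s0 by (intro z_exp_c_le) auto
        finally show "(real m * s) * s * exp (- (real m * s) / 3) \<le> 3" .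
        have "s\<^sup>2 \<le> 1" using s0 s1 by (simp add: power_le_one)
        moreover have "exp (- (real m * s) / 3) \<le> 1" using s0 by simp
        ultimately show "s\<^sup>2 * exp (- (real m * s) / 3) \<le> 1" by (simp add: mult_le_one)
      qed auto
      finally show ?thesis by simp
    qed
    have T2: "n * \<bar>(\<alpha> ^ m - r ^ m) * q\<bar> \<le> 296"
    proof (cases m)
      case 0 then show ?thesis by simp
    next
      case (Suc k)
      have "\<bar>(\<alpha> ^ m - r ^ m) * q\<bar> \<le> \<bar>\<alpha> ^ m - r ^ m\<bar>"
        using q0 q1 by (simp add: abs_mult mult_left_le)
      also have "\<dots> \<le> real (Suc k) * \<bar>\<alpha> - r\<bar> * M ^ k"
        unfolding Suc by (rule pow_diff_le[OF \<alpha>0 \<alpha>M r0 rM])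
      also have "\<dots> \<le> real (Suc k) * (2 * s\<^sup>2) * M ^ k"
        using d2 by (intro mult_right_mono mult_left_mono) (auto simp: M_def)
      finally have "n * \<bar>(\<alpha> ^ m - r ^ m) * q\<bar> \<le> n * (real (Suc k) * (2 * s\<^sup>2) * M ^ k)"
        using n1 by (simp add: mult_left_mono)
      also have "\<dots> \<le> (2 * real (Suc k)) * (real (Suc k) * (2 * s\<^sup>2) * M ^ k)"
        unfolding n_def Suc by (intro mult_right_mono) (auto simp: M_def)
      also have "\<dots> = 4 * ((real k * s + s)\<^sup>2 * exp (- (real k * s) / 3))"
        unfolding Mm by (simp add: algebra_simps power2_eq_square)
      also have "\<dots> \<le> 4 * ((2 * (real k * s)\<^sup>2 + 2) * exp (- (real k * s) / 3))"
      proof -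
        have "(real k * s + s)\<^sup>2 \<le> 2 * (real k * s)\<^sup>2 + 2 * s\<^sup>2"
          by (rule sq_sum_le)
        moreover have "s\<^sup>2 \<le> 1" using s0 s1 by (simp add: power_le_one)
        ultimately show ?thesis by (intro mult_left_mono mult_right_mono) auto
      qed
      also have "\<dots> = 8 * ((real k * s)\<^sup>2 * exp (- (real k * s) / 3)) + 8 * exp (- (real k * s) / 3)"
        by (simp add: algebra_simps)
      also have "\<dots> \<le> 8 * (4 * 3\<^sup>2) + 8 * 1"
      proof (intro add_mono mult_left_mono)
        show "(real k * s)\<^sup>2 * exp (- (real k * s) / 3) \<le> 4 * 3\<^sup>2" using s0 by (intro z2_exp_c_le) auto
        show "exp (- (real k * s) / 3) \<le> 1" using s0 by simp
      qed auto
      finally show ?thesis by simp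
    qed
    have "n * \<bar>exp (- (n * s)) - r ^ m * q\<bar> \<le> n * \<bar>\<alpha> ^ m * (\<alpha> - q)\<bar> + n * \<bar>(\<alpha> ^ m - r ^ m) * q\<bar>"
    proof -
      have "\<bar>\<alpha> ^ m * (\<alpha> - q) + (\<alpha> ^ m - r ^ m) * q\<bar> \<le> \<bar>\<alpha> ^ m * (\<alpha> - q)\<bar> + \<bar>(\<alpha> ^ m - r ^ m) * q\<bar>"
        by (rule abs_triangle_ineq)
      then have "n * \<bar>\<alpha> ^ m * (\<alpha> - q) + (\<alpha> ^ m - r ^ m) * q\<bar> \<le> n * (\<bar>\<alpha> ^ m * (\<alpha> - q)\<bar> + \<bar>(\<alpha> ^ m - r ^ m) * q\<bar>)"
        using n1 by (intro mult_left_mono) auto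
      then show ?thesis unfolding dec by (simp add: distrib_left)
    qed
    also have "\<dots> \<le> 400" using T1 T2 by simp
    finally show ?thesis using n1 by (simp add: field_simps)
  qed
  show ?thesis using main unfolding goal_eq[symmetric] n_def s_def by simp
qed

lemma vsum_add: "vsum E c + vsum E d = vsum E (\<lambda>e. c e + d e)"
  unfolding vsum_def by (simp add: sum.distrib scaleR_add_left)

lemma vsum_diff: "vsum E c - vsum E d = vsum E (\<lambda>e. c e - d e)"
  unfolding vsum_def by (simp add: sum_subtractf scaleR_diff_left)

lemma vsum_scale: "r *\<^sub>R vsum E c = vsum E (\<lambda>e. r * c e)"
  unfolding vsum_def by (simp add: scaleR_sum_right)

lemma inv_diag:
  assumes E: "onb E" "span E = V"
    and g: "\<And>c. g (vsum E c) = vsum E (\<lambda>e. m e * c e)"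
    and m: "\<forall>e\<in>E. m e \<noteq> 0"
  shows "the_inv_into V g (vsum E c) = vsum E (\<lambda>e. c e / m e)"
proof (rule the_inv_into_f_eq)
  show "inj_on g V"
  proof
    fix x y assume xy: "x \<in> V" "y \<in> V" "g x = g y"
    have x: "x = vsum E (\<lambda>e. inner x e)" using onb_span_vsum[OF E(1)] xy(1) E(2) by simp
    have y: "y = vsum E (\<lambda>e. inner y e)" using onb_span_vsum[OF E(1)] xy(2) E(2) by simp
    have "vsum E (\<lambda>e. m e * inner x e) = vsum E (\<lambda>e. m e * inner y e)"
      using xy(3) g x y by metis
    then have "\<forall>e\<in>E. m e * inner x e = m e * inner y e" by (simp only: vsum_eq_iff[OF E(1)])
    then have "\<forall>e\<in>E. inner x e = inner y e" using m by simp
    then have "vsum E (\<lambda>e. inner x e) = vsum E (\<lambda>e. inner y e)" by (simp only: vsum_eq_iff[OF E(1)])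
    then show "x = y" using x y by metis
  qed
  show "g (vsum E (\<lambda>e. c e / m e)) = vsum E c"
    unfolding g using m vsum_eq_iff[OF E(1)] by simp
  show "vsum E (\<lambda>e. c e / m e) \<in> V" using E(2) vsum_in_span by blast
qed

lemma funpow_diag:
  assumes g: "\<And>c. g (vsum E c) = vsum E (\<lambda>e. m e * c e)"
  shows "(g ^^ k) (vsum E c) = vsum E (\<lambda>e. m e ^ k * c e)"
proof (induction k)
  case 0 then show ?case by simp
next
  case (Suc k)
  have "(g ^^ Suc k) (vsum E c) = g ((g ^^ k) (vsum E c))" by simp
  also have "\<dots> = vsum E (\<lambda>e. m e * (m e ^ k * c e))" unfolding Suc g ..
  finally show ?case by (simp add: mult.assoc)
qed

lemma exp_diag:
  assumes E: "onb E"
    and g: "\<And>c. g (vsum E c) = vsum E (\<lambda>e. m e * c e)"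
  shows "exp_op t g (vsum E c) = vsum E (\<lambda>e. exp (- (t * m e)) * c e)"
proof -
  have fin: "finite E" using E by (simp add: onb_def)
  have trm: "((- t) ^ k / fact k) *\<^sub>R (g ^^ k) (vsum E c)
      = (\<Sum>e\<in>E. ((- (t * m e)) ^ k /\<^sub>R fact k * c e) *\<^sub>R e)" for k
    unfolding funpow_diag[OF g] unfolding vsum_def scaleR_sum_right
  proof (intro sum.cong refl)
    fix e
    have p: "(- (t * m e)) ^ k = (- t) ^ k * m e ^ k"
      by (metis minus_mult_left power_mult_distrib)
    have "((- t) ^ k / fact k) * (m e ^ k * c e) = ((- (t * m e)) ^ k /\<^sub>R fact k * c e)"
      unfolding p by (simp add: divide_inverse mult_ac)
    then show "((- t) ^ k / fact k) *\<^sub>R (m e ^ k * c e) *\<^sub>R e = ((- (t * m e)) ^ k /\<^sub>R fact k * c e) *\<^sub>R e"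
      by (simp only: scaleR_scaleR)
  qed
  have "(\<lambda>k. \<Sum>e\<in>E. ((- (t * m e)) ^ k /\<^sub>R fact k * c e) *\<^sub>R e) sums
        (\<Sum>e\<in>E. (exp (- (t * m e)) * c e) *\<^sub>R e)"
  proof (rule sums_sum)
    fix e assume "e \<in> E"
    show "(\<lambda>k. ((- (t * m e)) ^ k /\<^sub>R fact k * c e) *\<^sub>R e) sums ((exp (- (t * m e)) * c e) *\<^sub>R e)"
      by (intro sums_scaleR_left sums_mult2 exp_converges)
  qed
  then have "(\<lambda>k. ((- t) ^ k / fact k) *\<^sub>R (g ^^ k) (vsum E c)) sums vsum E (\<lambda>e. exp (- (t * m e)) * c e)"
    unfolding trm unfolding vsum_def .
  then show ?thesis unfolding exp_op_def by (simp add: sums_unique[symmetric])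
qed

lemma diag_setup:
  assumes V: "fin_dim_subspace V"
    and o1: "op_on V T1" and o2: "op_on V T2"
    and pos: "\<forall>v\<in>V. inner (T1 v) v \<ge> 0 \<and> inner (T2 v) v \<ge> 0"
    and def: "\<forall>v\<in>V. v \<noteq> 0 \<longrightarrow> inner (T1 v + T2 v) v > 0"
    and comm: "\<forall>v\<in>V. T1 (T2 v) = T2 (T1 v)"
    and sa: "\<forall>v\<in>V. \<forall>w\<in>V. inner (T1 v) w = inner v (T1 w) \<and> inner (T2 v) w = inner v (T2 w)"
  obtains E a b where "onb E" "span E = V"
    "\<And>c. T1 (vsum E c) = vsum E (\<lambda>e. a e * c e)"
    "\<And>c. T2 (vsum E c) = vsum E (\<lambda>e. b e * c e)"
    "\<forall>e\<in>E. a e \<ge> 0" "\<forall>e\<in>E. b e \<ge> 0" "\<forall>e\<in>E. a e + b e > 0"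
proof -
  obtain B where B: "subspace V" "finite B" "V = span B" using V unfolding fin_dim_subspace_def by blast
  obtain F0 where F0: "onb F0" "span F0 = V" using onb_of_subspace[OF B(1) _ B(2)] B(3) by blast
  have l1: "lin_on (span F0) T1" and l2: "lin_on (span F0) T2"
    and i1: "\<forall>v\<in>span F0. T1 v \<in> span F0" and i2: "\<forall>v\<in>span F0. T2 v \<in> span F0"
    using o1 o2 F0(2) unfolding op_on_def by auto
  obtain E where E: "onb E" "span E = span F0" "\<forall>e\<in>E. T1 e = inner (T1 e) e *\<^sub>R e"
     "\<forall>e\<in>E. T2 e = inner (T2 e) e *\<^sub>R e"
    using simul_diag'[OF F0(1) l1 l2 i1 i2] sa comm F0(2) by blast
  define a where "a = (\<lambda>e. inner (T1 e) e)"
  define b where "b = (\<lambda>e. inner (T2 e) e)"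
  have EV: "E \<subseteq> V" using E(2) F0(2) span_superset by blast
  have sV: "subspace V" by (rule B(1))
  have "T1 (vsum E c) = vsum E (\<lambda>e. a e * c e)" for c
    unfolding a_def by (rule diag_op[OF E(1) l1[unfolded F0(2)] sV EV E(3)])
  moreover have "T2 (vsum E c) = vsum E (\<lambda>e. b e * c e)" for c
    unfolding b_def by (rule diag_op[OF E(1) l2[unfolded F0(2)] sV EV E(4)])
  moreover have "\<forall>e\<in>E. a e \<ge> 0" "\<forall>e\<in>E. b e \<ge> 0" using pos EV unfolding a_def b_def by auto
  moreover have "\<forall>e\<in>E. a e + b e > 0"
  proof
    fix e assume "e \<in> E"
    then have "e \<in> V" "e \<noteq> 0" using EV onb_0[OF E(1)] by auto
    then show "a e + b e > 0" using def unfolding a_def b_def by (simp add: inner_add_left)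
  qed
  ultimately show ?thesis using that E(1,2) F0(2) by blast
qed

lemma per_h:
  assumes W: "fin_dim_subspace W" and o1: "op_on W T1" and o2: "op_on W T2"
    and Tsum: "\<forall>v\<in>W. T v = T1 v + T2 v"
    and pos: "\<forall>v\<in>W. inner (T1 v) v \<ge> 0 \<and> inner (T2 v) v \<ge> 0"
    and def: "\<forall>v\<in>W. v \<noteq> 0 \<longrightarrow> inner (T v) v > 0"
    and comm: "\<forall>v\<in>W. T1 (T2 v) = T2 (T1 v)"
    and sa: "\<forall>v\<in>W. \<forall>w\<in>W. inner (T1 v) w = inner v (T1 w) \<and> inner (T2 v) w = inner v (T2 w)"
  obtains E a b where "onb E" "span E = W"
    "\<And>c. T1 (vsum E c) = vsum E (\<lambda>e. a e * c e)"
    "\<And>c. T2 (vsum E c) = vsum E (\<lambda>e. b e * c e)"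
    "\<And>c. T (vsum E c) = vsum E (\<lambda>e. (a e + b e) * c e)"
    "\<forall>e\<in>E. a e \<ge> 0" "\<forall>e\<in>E. b e \<ge> 0" "\<forall>e\<in>E. a e + b e > 0"
proof -
  have def': "\<forall>v\<in>W. v \<noteq> 0 \<longrightarrow> inner (T1 v + T2 v) v > 0" using def Tsum by simp
  obtain E a b where E: "onb E" "span E = W"
    "\<And>c. T1 (vsum E c) = vsum E (\<lambda>e. a e * c e)"
    "\<And>c. T2 (vsum E c) = vsum E (\<lambda>e. b e * c e)"
    "\<forall>e\<in>E. a e \<ge> 0" "\<forall>e\<in>E. b e \<ge> 0" "\<forall>e\<in>E. a e + b e > 0"
    using diag_setup[OF W o1 o2 pos def' comm sa] by blast
  have "T (vsum E c) = vsum E (\<lambda>e. (a e + b e) * c e)" for c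
  proof -
    have "vsum E c \<in> W" using E(2) vsum_in_span by blast
    then have "T (vsum E c) = T1 (vsum E c) + T2 (vsum E c)" using Tsum by blast
    also have "\<dots> = vsum E (\<lambda>e. (a e + b e) * c e)"
      unfolding E(3,4) vsum_add by (simp add: distrib_right)
    finally show ?thesis .
  qed
  then show ?thesis using that E by blast
qed

lemma P_bound:
  fixes D D1 D2 :: "'a::{real_inner,complete_space} set"
    and A A1 A2 :: "'a \<Rightarrow> 'a"
    and I :: "real set"
    and V :: "real \<Rightarrow> 'a set"
    and P :: "real \<Rightarrow> 'a \<Rightarrow> 'a"
    and ipV :: "real \<Rightarrow> 'a \<Rightarrow> 'a \<Rightarrow> real"
    and Ah Ah1 Ah2 :: "real \<Rightarrow> 'a \<Rightarrow> 'a"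
  assumes condA: "cond_A D A D1 A1 D2 A2"
    and I_pos: "I \<subseteq> {0<..}"
    and Vh: "\<forall>h\<in>I. fin_dim_subspace (V h)"
    and Ph: "\<forall>h\<in>I. bounded_linear (P h) \<and> (\<forall>f. P h f \<in> V h) \<and> (\<forall>v\<in>V h. P h v = v)"
    and P_approx: "\<exists>C. \<forall>h\<in>I. \<forall>v\<in>D. norm (v - P h v) \<le> C * h\<^sup>2 * norm (A v)"
    and ipV: "\<forall>h\<in>I. inner_product_on (V h) (ipV h)"
    and normV: "\<exists>C. \<forall>h\<in>I. \<forall>v\<in>V h. norm v \<le> C * sqrt (ipV h v v)"
    and ops: "\<forall>h\<in>I. op_on (V h) (Ah h) \<and> op_on (V h) (Ah1 h) \<and> op_on (V h) (Ah2 h)"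
    and Ah_a: "\<exists>C>0. \<forall>h\<in>I. \<forall>v\<in>V h. inner (Ah h v) v \<ge> C * (sqrt (ipV h v v))\<^sup>2"
    and Ah_b: "\<exists>C. \<forall>h\<in>I. \<forall>v\<in>V h. \<forall>w\<in>V h.
                 \<bar>inner (Ah h v) w\<bar> \<le> C * sqrt (ipV h v v) * sqrt (ipV h w w)"
    and Ah_c: "\<forall>h\<in>I. \<forall>v\<in>V h. Ah h v = Ah1 h v + Ah2 h v"
    and Ah_d: "\<forall>h\<in>I. \<forall>v\<in>V h. inner (Ah1 h v) v \<ge> 0 \<and> inner (Ah2 h v) v \<ge> 0"
    and Ah_e: "\<exists>C. \<forall>h\<in>I. \<forall>f. norm (Ah1 h (P h f)) \<le> C / h\<^sup>2 * norm f
                            \<and> norm (Ah2 h (P h f)) \<le> C / h\<^sup>2 * norm f"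
    and Ah_f: "\<exists>C. \<forall>h\<in>I. \<forall>v\<in>D. norm (P h (A1 v) - Ah1 h (P h v)) \<le> C * norm (A v)
                             \<and> norm (P h (A2 v) - Ah2 h (P h v)) \<le> C * norm (A v)"
    and Ah_g: "\<exists>C. \<forall>h\<in>I. \<forall>f.
                 norm (the_inv_into D A f - the_inv_into (V h) (Ah h) (P h f)) \<le> C * h\<^sup>2 * norm f"
    and commute: "\<forall>h\<in>I. \<forall>v\<in>V h. Ah1 h (Ah2 h v) = Ah2 h (Ah1 h v)"
    and selfadj: "\<forall>h\<in>I. \<forall>v\<in>V h. \<forall>w\<in>V h.
                    inner (Ah1 h v) w = inner v (Ah1 h w) \<and> inner (Ah2 h v) w = inner v (Ah2 h w)"
  shows "\<exists>Cp. \<forall>h\<in>I. \<forall>f. norm (P h f) \<le> Cp * norm f"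
proof -
  obtain Ca where Ca: "\<forall>h\<in>I. \<forall>v\<in>D. norm (v - P h v) \<le> Ca * h\<^sup>2 * norm (A v)" using P_approx by blast
  obtain Ce where Ce: "\<forall>h\<in>I. \<forall>f. norm (Ah1 h (P h f)) \<le> Ce / h\<^sup>2 * norm f
                            \<and> norm (Ah2 h (P h f)) \<le> Ce / h\<^sup>2 * norm f" using Ah_e by blast
  obtain Cg where Cg: "\<forall>h\<in>I. \<forall>f.
      norm (the_inv_into D A f - the_inv_into (V h) (Ah h) (P h f)) \<le> Cg * h\<^sup>2 * norm f" using Ah_g by blast
  obtain Cd where Cd: "Cd > 0" "\<forall>h\<in>I. \<forall>v\<in>V h. inner (Ah h v) v \<ge> Cd * (sqrt (ipV h v v))\<^sup>2"
    using Ah_a by blast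
  have subD: "subspace D" using condA unfolding cond_A_def by blast
  have linA: "lin_on D A" using condA unfolding cond_A_def by blast
  have bijA: "bij_betw A D UNIV" using condA unfolding cond_A_def by blast
  obtain \<phi> Cs where phi: "0 < \<phi>" "\<phi> < pi / 2"
    and sec: "\<forall>z\<in>sector \<phi>. bij_betw (cplx_shift A z) (D \<times> D) UNIV \<and>
           (\<forall>p\<in>D \<times> D. norm p \<le> Cs / cmod z * norm (cplx_shift A z p))"
    using condA unfolding cond_A_def by blast
  define Cs' where "Cs' = \<bar>Cs\<bar>"
  define Ca' where "Ca' = \<bar>Ca\<bar>"
  define Ce' where "Ce' = \<bar>Ce\<bar>"
  define Cg' where "Cg' = \<bar>Cg\<bar>"
  define K1 where "K1 = Cs' + Cg' * (1 + Cs')"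
  define K2 where "K2 = 2 * Ce' * (1 + Cs')"
  have Cs'0: "Cs' \<ge> 0" and Ca'0: "Ca' \<ge> 0" and Ce'0: "Ce' \<ge> 0" and Cg'0: "Cg' \<ge> 0"
    unfolding Cs'_def Ca'_def Ce'_def Cg'_def by auto
  have K10: "K1 \<ge> 0" and K20: "K2 \<ge> 0" unfolding K1_def K2_def using Cs'0 Cg'0 Ce'0 by auto
  show ?thesis
  proof (intro exI[of _ "Cs' + Ca' * (1 + Cs') + sqrt (K1 * K2)"] ballI allI)
    fix h g assume h: "h \<in> I"
    have h0: "h > 0" using h I_pos by auto
    define s where "s = 1 / h\<^sup>2"
    have s0: "s > 0" unfolding s_def using h0 by simp
    have sh: "s * h\<^sup>2 = 1" unfolding s_def using h0 by simp
    define z where "z = complex_of_real (- s)"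
    have Az: "Arg z = pi" unfolding z_def using s0 by (subst Arg_of_real) simp
    have "z \<noteq> 0" unfolding z_def using s0 by simp
    then have zs: "z \<in> sector \<phi>"
      unfolding sector_def using Az phi by simp
    have cz: "cmod z = s" unfolding z_def using s0 by simp
    have bz: "bij_betw (cplx_shift A z) (D \<times> D) UNIV" using sec zs by blast
    then have "cplx_shift A z ` (D \<times> D) = UNIV" unfolding bij_betw_def by (rule conjunct2)
    then have "(g, 0) \<in> cplx_shift A z ` (D \<times> D)" by (simp only: UNIV_I)
    then obtain pp where pp: "pp \<in> D \<times> D" "cplx_shift A z pp = (g, 0)" by (rule imageE) simp
    define u where "u = fst pp"
    define u2 where "u2 = snd pp"
    have uu: "u \<in> D" "u2 \<in> D" "cplx_shift A z (u, u2) = (g, 0)"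
      using pp unfolding u_def u2_def by auto
    have Rez: "Re z = - s" and Imz: "Im z = 0" unfolding z_def by simp_all
    have "fst (cplx_shift A z (u, u2)) = A u + s *\<^sub>R u"
      unfolding cplx_shift_def fst_conv Rez Imz by simp
    then have Au: "A u + s *\<^sub>R u = g" using uu(3) by simp
    have ncs: "norm (cplx_shift A z (u, u2)) = norm g" unfolding uu(3) norm_Pair by simp
    have "norm (u, u2) \<le> Cs / cmod z * norm (cplx_shift A z (u, u2))" using sec zs uu(1,2) by blast
    then have "norm (u, u2) \<le> Cs / s * norm g" unfolding ncs cz .
    moreover have "Cs / s * norm g \<le> Cs' / s * norm g"
    proof (rule mult_right_mono)
      show "Cs / s \<le> Cs' / s" unfolding Cs'_def using s0 by (intro divide_right_mono) auto
    qed simp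
    ultimately have "norm u \<le> Cs' / s * norm g" using norm_fst_le[of u u2] by linarith
    then have nu: "norm u \<le> Cs' * h\<^sup>2 * norm g" unfolding s_def by simp
    have snu: "s * norm u \<le> Cs' * norm g"
    proof -
      have "s * norm u \<le> s * (Cs' * h\<^sup>2 * norm g)" using nu s0 by (simp add: mult_left_mono)
      also have "\<dots> = Cs' * norm g * (s * h\<^sup>2)" by (simp add: algebra_simps)
      finally show ?thesis using sh by simp
    qed
    have nAu: "norm (A u) \<le> (1 + Cs') * norm g"
    proof -
      have "A u = g - s *\<^sub>R u" using Au by (simp add: algebra_simps)
      then have "norm (A u) \<le> norm g + norm (s *\<^sub>R u)" using norm_triangle_ineq4[of g "s *\<^sub>R u"] by simp
      also have "norm (s *\<^sub>R u) = s * norm u" using s0 by simp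
      finally show ?thesis using snu by (simp add: algebra_simps)
    qed
    define v1 where "v1 = s *\<^sub>R u"
    define w where "w = A u"
    have v1D: "v1 \<in> D" unfolding v1_def using subD uu(1) by (simp add: subspace_scale)
    have Av1: "A v1 = s *\<^sub>R A u" unfolding v1_def using linA uu(1) unfolding lin_on_def by blast
    have gsplit: "g = v1 + w" unfolding v1_def w_def using Au by (simp add: algebra_simps)
    have nw: "norm w \<le> (1 + Cs') * norm g" unfolding w_def by (rule nAu)
    have Pv1: "norm (P h v1) \<le> (Cs' + Ca' * (1 + Cs')) * norm g"
    proof -
      have "norm (v1 - P h v1) \<le> Ca * h\<^sup>2 * norm (A v1)" using Ca h v1D by blast
      also have "\<dots> \<le> Ca' * h\<^sup>2 * norm (A v1)" unfolding Ca'_def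
        by (intro mult_right_mono) auto
      also have "norm (A v1) = s * norm (A u)" unfolding Av1 using s0 by simp
      also have "Ca' * h\<^sup>2 * (s * norm (A u)) = Ca' * norm (A u) * (s * h\<^sup>2)" by (simp add: algebra_simps)
      also have "\<dots> = Ca' * norm (A u)" using sh by simp
      also have "\<dots> \<le> Ca' * ((1 + Cs') * norm g)" using nAu Ca'0 by (rule mult_left_mono)
      finally have d: "norm (v1 - P h v1) \<le> Ca' * ((1 + Cs') * norm g)" .
      have "norm v1 = s * norm u" unfolding v1_def using s0 by simp
      then have "norm v1 \<le> Cs' * norm g" using snu by simp
      moreover have "norm (P h v1) \<le> norm v1 + norm (v1 - P h v1)"
        using norm_triangle_sub[of "P h v1" v1] norm_minus_commute[of "P h v1" v1] by simp
      ultimately show ?thesis using d by (simp add: algebra_simps)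
    qed
    define x where "x = P h w"
    define y where "y = the_inv_into (V h) (Ah h) x"
    have invu: "the_inv_into D A w = u" unfolding w_def using bijA uu(1) unfolding bij_betw_def
      by (simp add: the_inv_into_f_f)
    have ny: "norm y \<le> K1 * h\<^sup>2 * norm g"
    proof -
      have "norm (the_inv_into D A w - the_inv_into (V h) (Ah h) (P h w)) \<le> Cg * h\<^sup>2 * norm w"
        using Cg h by blast
      then have "norm (u - y) \<le> Cg * h\<^sup>2 * norm w" unfolding invu y_def x_def .
      also have "\<dots> \<le> Cg' * h\<^sup>2 * norm w" unfolding Cg'_def by (intro mult_right_mono) auto
      also have "\<dots> \<le> Cg' * h\<^sup>2 * ((1 + Cs') * norm g)" using nw Cg'0 by (intro mult_left_mono) auto
      finally have "norm (u - y) \<le> Cg' * h\<^sup>2 * ((1 + Cs') * norm g)" .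
      moreover have "norm y \<le> norm u + norm (u - y)"
        using norm_triangle_sub[of y u] norm_minus_commute[of y u] by simp
      ultimately show ?thesis using nu unfolding K1_def by (simp add: algebra_simps)
    qed
    have nAx: "norm (Ah h x) \<le> K2 / h\<^sup>2 * norm g"
    proof -
      have xV: "x \<in> V h" unfolding x_def using Ph h by blast
      have "Ah h x = Ah1 h x + Ah2 h x" using Ah_c h xV by blast
      then have "norm (Ah h x) \<le> norm (Ah1 h x) + norm (Ah2 h x)" by (simp add: norm_triangle_ineq)
      also have "\<dots> \<le> Ce / h\<^sup>2 * norm w + Ce / h\<^sup>2 * norm w" using Ce h unfolding x_def by (intro add_mono) blast+
      also have "\<dots> \<le> Ce' / h\<^sup>2 * norm w + Ce' / h\<^sup>2 * norm w" unfolding Ce'_def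
        by (intro add_mono mult_right_mono divide_right_mono) auto
      also have "\<dots> = 2 * Ce' / h\<^sup>2 * norm w" by simp
      also have "\<dots> \<le> 2 * Ce' / h\<^sup>2 * ((1 + Cs') * norm g)" using nw Ce'0 h0 by (intro mult_left_mono) auto
      also have "\<dots> = K2 / h\<^sup>2 * norm g" unfolding K2_def by simp
      finally show ?thesis .
    qed
    \<comment> \<open>spectral argument: norm x squared is bounded by norm y times norm (Ah x)\<close>
    have W: "fin_dim_subspace (V h)" using Vh h by blast
    have o1: "op_on (V h) (Ah1 h)" and o2: "op_on (V h) (Ah2 h)" using ops h by auto
    have Tsum: "\<forall>v\<in>V h. Ah h v = Ah1 h v + Ah2 h v" using Ah_c h by blast
    have pos: "\<forall>v\<in>V h. inner (Ah1 h v) v \<ge> 0 \<and> inner (Ah2 h v) v \<ge> 0" using Ah_d h by blast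
    have def: "\<forall>v\<in>V h. v \<noteq> 0 \<longrightarrow> inner (Ah h v) v > 0"
    proof (intro ballI impI)
      fix v assume v: "v \<in> V h" "v \<noteq> 0"
      have "ipV h v v > 0" using ipV h v unfolding inner_product_on_def by blast
      then have "(sqrt (ipV h v v))\<^sup>2 > 0" by simp
      then have "Cd * (sqrt (ipV h v v))\<^sup>2 > 0" using Cd(1) by simp
      then show "inner (Ah h v) v > 0" using Cd(2) h v(1) by fastforce
    qed
    have comm: "\<forall>v\<in>V h. Ah1 h (Ah2 h v) = Ah2 h (Ah1 h v)" using commute h by blast
    have sa: "\<forall>v\<in>V h. \<forall>w\<in>V h. inner (Ah1 h v) w = inner v (Ah1 h w) \<and> inner (Ah2 h v) w = inner v (Ah2 h w)"
      using selfadj h by blast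
    obtain E a b where E0: "onb E" "span E = V h"
      "\<And>c. Ah1 h (vsum E c) = vsum E (\<lambda>e. a e * c e)"
      "\<And>c. Ah2 h (vsum E c) = vsum E (\<lambda>e. b e * c e)"
      "\<And>c. Ah h (vsum E c) = vsum E (\<lambda>e. (a e + b e) * c e)"
      "\<forall>e\<in>E. a e \<ge> 0" "\<forall>e\<in>E. b e \<ge> 0" "\<forall>e\<in>E. a e + b e > 0"
      using per_h[OF W o1 o2 Tsum pos def comm sa] by blast
    note E = E0(1,2,5,8)
    define c where "c = (\<lambda>e. inner x e)"
    have xV: "x \<in> V h" unfolding x_def using Ph h by blast
    have xc: "x = vsum E c" unfolding c_def using onb_span_vsum[OF E(1)] xV E(2) by simp
    have yc: "y = vsum E (\<lambda>e. c e / (a e + b e))"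
      unfolding y_def xc by (rule inv_diag[OF E(1,2) E(3)]) (use E(4) in auto)
    have "(norm x)\<^sup>2 = inner y (Ah h x)"
    proof -
      have "inner y (Ah h x) = (\<Sum>e\<in>E. c e / (a e + b e) * ((a e + b e) * c e))"
        unfolding yc xc E(3) by (rule inner_vsum[OF E(1)])
      also have "\<dots> = (\<Sum>e\<in>E. (c e)\<^sup>2)"
        using E(4) by (intro sum.cong) (auto simp: power2_eq_square)
      also have "\<dots> = (norm x)\<^sup>2" unfolding xc by (rule norm_vsum_sq[OF E(1), symmetric])
      finally show ?thesis by simp
    qed
    also have "\<dots> \<le> norm y * norm (Ah h x)" by (rule norm_cauchy_schwarz)
    also have "\<dots> \<le> (K1 * h\<^sup>2 * norm g) * (K2 / h\<^sup>2 * norm g)"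
      using ny nAx K10 by (intro mult_mono) auto
    also have "\<dots> = K1 * K2 * (norm g)\<^sup>2 * (h\<^sup>2 / h\<^sup>2)"
      by (simp add: power2_eq_square)
    also have "\<dots> = K1 * K2 * (norm g)\<^sup>2" using h0 by simp
    also have "\<dots> = (sqrt (K1 * K2) * norm g)\<^sup>2"
      using K10 K20 by (simp add: power_mult_distrib)
    finally have nx2: "(norm x)\<^sup>2 \<le> (sqrt (K1 * K2) * norm g)\<^sup>2" .
    have nx: "norm x \<le> sqrt (K1 * K2) * norm g"
      by (rule power2_le_imp_le[OF nx2]) (use K10 K20 in simp)
    have lin: "linear (P h)" using Ph h bounded_linear.linear by blast
    have "P h g = P h v1 + x" unfolding x_def gsplit using lin by (simp add: linear_add)
    then have "norm (P h g) \<le> norm (P h v1) + norm x" by (simp add: norm_triangle_ineq)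
    also have "\<dots> \<le> (Cs' + Ca' * (1 + Cs')) * norm g + sqrt (K1 * K2) * norm g"
      using Pv1 nx by (rule add_mono)
    finally show "norm (P h g) \<le> (Cs' + Ca' * (1 + Cs') + sqrt (K1 * K2)) * norm g"
      by (simp add: algebra_simps)
  qed
qed


theorem lemmaD1:
  fixes D D1 D2 :: "'a::{real_inner,complete_space} set"
    and A A1 A2 :: "'a \<Rightarrow> 'a"
    and I :: "real set"
    and V :: "real \<Rightarrow> 'a set"
    and P :: "real \<Rightarrow> 'a \<Rightarrow> 'a"
    and ipV :: "real \<Rightarrow> 'a \<Rightarrow> 'a \<Rightarrow> real"
    and Ah Ah1 Ah2 :: "real \<Rightarrow> 'a \<Rightarrow> 'a"
  assumes condA: "cond_A D A D1 A1 D2 A2"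
    and I_pos: "I \<subseteq> {0<..}"
    \<comment> \<open>Condition (P)\<close>
    and Vh: "\<forall>h\<in>I. fin_dim_subspace (V h)"
    and Ph: "\<forall>h\<in>I. bounded_linear (P h) \<and> (\<forall>f. P h f \<in> V h) \<and> (\<forall>v\<in>V h. P h v = v)"
    and P_approx: "\<exists>C. \<forall>h\<in>I. \<forall>v\<in>D. norm (v - P h v) \<le> C * h\<^sup>2 * norm (A v)"
    \<comment> \<open>Condition (Ah)\<close>
    and ipV: "\<forall>h\<in>I. inner_product_on (V h) (ipV h)"
    and normV: "\<exists>C. \<forall>h\<in>I. \<forall>v\<in>V h. norm v \<le> C * sqrt (ipV h v v)"
    and ops: "\<forall>h\<in>I. op_on (V h) (Ah h) \<and> op_on (V h) (Ah1 h) \<and> op_on (V h) (Ah2 h)"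
    and Ah_a: "\<exists>C>0. \<forall>h\<in>I. \<forall>v\<in>V h. inner (Ah h v) v \<ge> C * (sqrt (ipV h v v))\<^sup>2"
    and Ah_b: "\<exists>C. \<forall>h\<in>I. \<forall>v\<in>V h. \<forall>w\<in>V h.
                 \<bar>inner (Ah h v) w\<bar> \<le> C * sqrt (ipV h v v) * sqrt (ipV h w w)"
    and Ah_c: "\<forall>h\<in>I. \<forall>v\<in>V h. Ah h v = Ah1 h v + Ah2 h v"
    and Ah_d: "\<forall>h\<in>I. \<forall>v\<in>V h. inner (Ah1 h v) v \<ge> 0 \<and> inner (Ah2 h v) v \<ge> 0"
    and Ah_e: "\<exists>C. \<forall>h\<in>I. \<forall>f. norm (Ah1 h (P h f)) \<le> C / h\<^sup>2 * norm f
                            \<and> norm (Ah2 h (P h f)) \<le> C / h\<^sup>2 * norm f"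
    and Ah_f: "\<exists>C. \<forall>h\<in>I. \<forall>v\<in>D. norm (P h (A1 v) - Ah1 h (P h v)) \<le> C * norm (A v)
                             \<and> norm (P h (A2 v) - Ah2 h (P h v)) \<le> C * norm (A v)"
    and Ah_g: "\<exists>C. \<forall>h\<in>I. \<forall>f.
                 norm (the_inv_into D A f - the_inv_into (V h) (Ah h) (P h f)) \<le> C * h\<^sup>2 * norm f"
    \<comment> \<open>additional assumptions: A_{h,1}, A_{h,2} commute and are self-adjoint\<close>
    and commute: "\<forall>h\<in>I. \<forall>v\<in>V h. Ah1 h (Ah2 h v) = Ah2 h (Ah1 h v)"
    and selfadj: "\<forall>h\<in>I. \<forall>v\<in>V h. \<forall>w\<in>V h.
                    inner (Ah1 h v) w = inner v (Ah1 h w) \<and> inner (Ah2 h v) w = inner v (Ah2 h w)"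
  shows "\<exists>C. \<forall>h\<in>I. \<forall>tf::real. \<forall>N::nat. \<forall>n\<in>{1..N}. \<forall>f. tf > 0 \<longrightarrow>
     (let \<tau> = tf / real N; t = real n * \<tau>;
          R1 = the_inv_into (V h) (\<lambda>v. v + \<tau> *\<^sub>R Ah1 h v);
          R2 = the_inv_into (V h) (\<lambda>v. v + \<tau> *\<^sub>R Ah2 h v);
          S = (\<lambda>v. R2 (R1 (v + \<tau>\<^sup>2 *\<^sub>R Ah1 h (Ah2 h v))))
      in norm (exp_op t (Ah h) (P h f) - (S ^^ (n - 1)) (R2 (R1 (P h f))))
           \<le> C * (\<tau> / t) * norm f)"
proof -
  obtain Cp where Cp: "\<forall>h\<in>I. \<forall>f. norm (P h f) \<le> Cp * norm f"
    using P_bound[OF condA I_pos Vh Ph P_approx ipV normV ops Ah_a Ah_b Ah_c Ah_d Ah_e Ah_f Ah_g commute selfadj]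
    by blast
  obtain Ca where Ca: "Ca > 0" "\<forall>h\<in>I. \<forall>v\<in>V h. inner (Ah h v) v \<ge> Ca * (sqrt (ipV h v v))\<^sup>2"
    using Ah_a by blast
  show ?thesis
  proof (intro exI[of _ "400 * Cp"] ballI allI impI)
    fix h tf :: real and N n :: nat and f :: 'a
    assume h: "h \<in> I" and n: "n \<in> {1..N}" and tf: "tf > (0::real)"
    define \<tau> where "\<tau> = tf / real N"
    define t where "t = real n * \<tau>"
    define R1 where "R1 = the_inv_into (V h) (\<lambda>v. v + \<tau> *\<^sub>R Ah1 h v)"
    define R2 where "R2 = the_inv_into (V h) (\<lambda>v. v + \<tau> *\<^sub>R Ah2 h v)"
    define S where "S = (\<lambda>v. R2 (R1 (v + \<tau>\<^sup>2 *\<^sub>R Ah1 h (Ah2 h v))))"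
    have n1: "n \<ge> 1" "n \<le> N" using n by auto
    have tau0: "\<tau> > 0" unfolding \<tau>_def using tf n1 by simp
    have W: "fin_dim_subspace (V h)" using Vh h by blast
    have o1: "op_on (V h) (Ah1 h)" and o2: "op_on (V h) (Ah2 h)" using ops h by auto
    have Tsum: "\<forall>v\<in>V h. Ah h v = Ah1 h v + Ah2 h v" using Ah_c h by blast
    have pos: "\<forall>v\<in>V h. inner (Ah1 h v) v \<ge> 0 \<and> inner (Ah2 h v) v \<ge> 0" using Ah_d h by blast
    have def: "\<forall>v\<in>V h. v \<noteq> 0 \<longrightarrow> inner (Ah h v) v > 0"
    proof (intro ballI impI)
      fix v assume v: "v \<in> V h" "v \<noteq> 0"
      have "ipV h v v > 0" using ipV h v unfolding inner_product_on_def by blast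
      then have "(sqrt (ipV h v v))\<^sup>2 > 0" by simp
      then have "Ca * (sqrt (ipV h v v))\<^sup>2 > 0" using Ca(1) by simp
      then show "inner (Ah h v) v > 0" using Ca(2) h v(1) by fastforce
    qed
    have comm: "\<forall>v\<in>V h. Ah1 h (Ah2 h v) = Ah2 h (Ah1 h v)" using commute h by blast
    have sa: "\<forall>v\<in>V h. \<forall>w\<in>V h. inner (Ah1 h v) w = inner v (Ah1 h w) \<and> inner (Ah2 h v) w = inner v (Ah2 h w)"
      using selfadj h by blast
    obtain E a b where E: "onb E" "span E = V h"
      "\<And>c. Ah1 h (vsum E c) = vsum E (\<lambda>e. a e * c e)"
      "\<And>c. Ah2 h (vsum E c) = vsum E (\<lambda>e. b e * c e)"
      "\<And>c. Ah h (vsum E c) = vsum E (\<lambda>e. (a e + b e) * c e)"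
      "\<forall>e\<in>E. a e \<ge> 0" "\<forall>e\<in>E. b e \<ge> 0" "\<forall>e\<in>E. a e + b e > 0"
      using per_h[OF W o1 o2 Tsum pos def comm sa] by blast
    have g1: "(\<lambda>v. v + \<tau> *\<^sub>R Ah1 h v) (vsum E c) = vsum E (\<lambda>e. (1 + \<tau> * a e) * c e)" for c
      unfolding E(3) vsum_scale vsum_add by (simp add: algebra_simps)
    have g2: "(\<lambda>v. v + \<tau> *\<^sub>R Ah2 h v) (vsum E c) = vsum E (\<lambda>e. (1 + \<tau> * b e) * c e)" for c
      unfolding E(4) vsum_scale vsum_add by (simp add: algebra_simps)
    have pa: "\<forall>e\<in>E. 1 + \<tau> * a e > 0" and pb: "\<forall>e\<in>E. 1 + \<tau> * b e > 0"
      using E(6,7) tau0 by (simp_all add: add_pos_nonneg)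
    have R1: "R1 (vsum E c) = vsum E (\<lambda>e. c e / (1 + \<tau> * a e))" for c
      unfolding R1_def by (rule inv_diag[OF E(1,2) g1]) (use pa in auto)
    have R2: "R2 (vsum E c) = vsum E (\<lambda>e. c e / (1 + \<tau> * b e))" for c
      unfolding R2_def by (rule inv_diag[OF E(1,2) g2]) (use pb in auto)
    define \<sigma> where "\<sigma> = (\<lambda>e. (1 + \<tau>\<^sup>2 * (a e * b e)) / (1 + \<tau> * a e) / (1 + \<tau> * b e))"
    have Sd: "S (vsum E c) = vsum E (\<lambda>e. \<sigma> e * c e)" for c
    proof -
      have eq: "vsum E c + \<tau>\<^sup>2 *\<^sub>R Ah1 h (Ah2 h (vsum E c)) = vsum E (\<lambda>e. (1 + \<tau>\<^sup>2 * (a e * b e)) * c e)"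
        unfolding E(3,4) vsum_scale vsum_add by (simp add: algebra_simps)
      have "S (vsum E c) = R2 (R1 (vsum E c + \<tau>\<^sup>2 *\<^sub>R Ah1 h (Ah2 h (vsum E c))))"
        unfolding S_def by simp
      also have "\<dots> = R2 (R1 (vsum E (\<lambda>e. (1 + \<tau>\<^sup>2 * (a e * b e)) * c e)))"
        by (simp only: eq)
      also have "\<dots> = vsum E (\<lambda>e. (1 + \<tau>\<^sup>2 * (a e * b e)) * c e / (1 + \<tau> * a e) / (1 + \<tau> * b e))"
        unfolding R1 R2 ..
      also have "\<dots> = vsum E (\<lambda>e. \<sigma> e * c e)"
        unfolding vsum_eq_iff[OF E(1)] \<sigma>_def using pa pb by (simp add: field_simps)
      finally show ?thesis .
    qed
    define v where "v = P h f"
    define c where "c = (\<lambda>e. inner v e)"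
    have vV: "v \<in> V h" unfolding v_def using Ph h by blast
    have vc: "v = vsum E c" unfolding c_def using onb_span_vsum[OF E(1)] vV E(2) by simp
    have ex: "exp_op t (Ah h) v = vsum E (\<lambda>e. exp (- (t * (a e + b e))) * c e)"
      unfolding vc by (rule exp_diag[OF E(1) E(5)])
    have dis: "(S ^^ (n - 1)) (R2 (R1 v)) = vsum E (\<lambda>e. \<sigma> e ^ (n - 1) * (c e / (1 + \<tau> * a e) / (1 + \<tau> * b e)))"
      unfolding vc R1 R2 by (rule funpow_diag[OF Sd])
    define \<mu> where "\<mu> = (\<lambda>e. exp (- (t * (a e + b e))) - \<sigma> e ^ (n - 1) / (1 + \<tau> * a e) / (1 + \<tau> * b e))"
    have diff: "exp_op t (Ah h) v - (S ^^ (n - 1)) (R2 (R1 v)) = vsum E (\<lambda>e. \<mu> e * c e)"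
      unfolding ex dis vsum_diff \<mu>_def by (simp add: algebra_simps)
    have mub: "\<forall>e\<in>E. \<bar>\<mu> e\<bar> \<le> 400 / real n"
    proof
      fix e assume e: "e \<in> E"
      define x where "x = \<tau> * a e"
      define y where "y = \<tau> * b e"
      have x0: "x \<ge> 0" and y0: "y \<ge> 0" unfolding x_def y_def using E(6,7) e tau0 by auto
      have "\<mu> e = exp (- ((real (n - 1) + 1) * (x + y))) - ((1 + x*y)/((1+x)*(1+y)))^(n - 1) / ((1+x)*(1+y))"
        unfolding \<mu>_def \<sigma>_def x_def y_def t_def using n1
        by (simp add: of_nat_diff algebra_simps power2_eq_square)
      then show "\<bar>\<mu> e\<bar> \<le> 400 / real n" using scalar_bound[OF x0 y0, of "n - 1"] n1 by (simp add: of_nat_diff)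
    qed
    have nd: "norm (vsum E (\<lambda>e. \<mu> e * c e)) \<le> 400 / real n * norm (vsum E c)"
      by (rule norm_diag_le[OF E(1) _ mub]) simp
    have "norm (exp_op t (Ah h) v - (S ^^ (n - 1)) (R2 (R1 v))) \<le> 400 / real n * norm v"
      unfolding diff using nd vc by simp
    also have "\<dots> \<le> 400 / real n * (Cp * norm f)"
      using Cp h unfolding v_def by (intro mult_left_mono) auto
    also have "\<dots> = 400 * Cp * (\<tau> / t) * norm f"
      unfolding t_def using tau0 n1 by (simp add: field_simps)
    finally show "let \<tau> = tf / real N; t = real n * \<tau>;
          R1 = the_inv_into (V h) (\<lambda>v. v + \<tau> *\<^sub>R Ah1 h v);
          R2 = the_inv_into (V h) (\<lambda>v. v + \<tau> *\<^sub>R Ah2 h v);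
          S = (\<lambda>v. R2 (R1 (v + \<tau>\<^sup>2 *\<^sub>R Ah1 h (Ah2 h v))))
      in norm (exp_op t (Ah h) (P h f) - (S ^^ (n - 1)) (R2 (R1 (P h f))))
           \<le> 400 * Cp * (\<tau> / t) * norm f"
      unfolding Let_def \<tau>_def[symmetric] t_def[symmetric] R1_def[symmetric] R2_def[symmetric]
        S_def[symmetric] v_def[symmetric] .
  qed
qed

end
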